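(* Let $X$ be a topological space, $b\in X$, and $\mathcal{U}$ an open covering of $X$ such that $b\in U$ for every $U\in\mathcal{U}$, every $U\in\mathcal{U}$ is path-connected, $U\cap V$ is path-connected for all $U,V\in\mathcal{U}$, and $U\cap V\cap W$ is path-connected for all $U,V,W\in\mathcal{U}$. Let $G$ be a group. Given a family $\{h_U\in H^1(U,b)\}_{U\in\mathcal{U}}$, there exists $h\in H^1(X,b)$ with $r_U(h)=h_U$ for every $U\in\mathcal{U}$ if and only if $r_{U\cap V}(h_U)=r_{U\cap V}(h_V)$ for every pair $U,V\in\mathcal{U}$. If such a class $h$ exists, it is unique.
   Context: Conventions: a path in a space $W$ is a continuous map $[0,1]\to W$; $P(W)$ is the set of paths; $p\cdot q$ is concatenation when $p(1)=q(0)$; homotopies of paths are relative to $\{0,1\}$, $p\sim q$ means homotopic. $G$ has unit $1$. For $b\in W$: a $0$-cochain of $(W,b)$ is a map $c\colon W\to G$ with $c(b)=1$; these form a group $C^0(W,b)$ under pointwise multiplication. A $1$-cochain is a map $u\colon P(W)\to G$ with $u(p)=1$ for the constant path at $b$; it is a cocycle if $u(p)=u(q)$ when $p\sim q$ and $u(p\cdot q)=u(p)u(q)$ when defined. $C^0(W,b)$ acts on cocycles by $(c\bullet u)(p)=c(p(0))u(p)c(p(1))^{-1}$; $H^1(W,b)$ is the set of orbits. For $A\subset W$ with $b\in A$, $r_A\colon H^1(W,b)\to H^1(A,b)$ is induced by restricting cocycles to paths in $A$. *)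

theory Defs
  imports "HOL-Analysis.Analysis" "HOL-Algebra.Group"
begin

definition path_cat :: "(real \<Rightarrow> 'a) \<Rightarrow> (real \<Rightarrow> 'a) \<Rightarrow> real \<Rightarrow> 'a" where
  "path_cat p q = (\<lambda>t. if t \<le> 1/2 then p (2 * t) else q (2 * t - 1))"

definition path_homotopic :: "'a topology \<Rightarrow> (real \<Rightarrow> 'a) \<Rightarrow> (real \<Rightarrow> 'a) \<Rightarrow> bool" where
  "path_homotopic W p q \<longleftrightarrow>
     homotopic_with (\<lambda>h. h 0 = p 0 \<and> h 1 = p 1) (top_of_set {0..1}) W p q"

definition cochain0 :: "'a topology \<Rightarrow> 'a \<Rightarrow> ('g, 'm) monoid_scheme \<Rightarrow> ('a \<Rightarrow> 'g) set" where
  "cochain0 W b G = {c. c \<in> topspace W \<rightarrow>\<^sub>E carrier G \<and> c b = \<one>\<^bsub>G\<^esub>}"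

definition cocycle1 :: "'a topology \<Rightarrow> 'a \<Rightarrow> ('g, 'm) monoid_scheme \<Rightarrow> ((real \<Rightarrow> 'a) \<Rightarrow> 'g) set" where
  "cocycle1 W b G = {u. u \<in> Collect (pathin W) \<rightarrow>\<^sub>E carrier G
      \<and> u (\<lambda>t. b) = \<one>\<^bsub>G\<^esub>
      \<and> (\<forall>p q. pathin W p \<and> pathin W q \<and> path_homotopic W p q \<longrightarrow> u p = u q)
      \<and> (\<forall>p q. pathin W p \<and> pathin W q \<and> p 1 = q 0 \<longrightarrow>
                u (path_cat p q) = u p \<otimes>\<^bsub>G\<^esub> u q)}"

definition cochain_act :: "'a topology \<Rightarrow> ('g, 'm) monoid_scheme \<Rightarrow> ('a \<Rightarrow> 'g) \<Rightarrow> ((real \<Rightarrow> 'a) \<Rightarrow> 'g)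
     \<Rightarrow> ((real \<Rightarrow> 'a) \<Rightarrow> 'g)" where
  "cochain_act W G c u = (\<lambda>p\<in>Collect (pathin W). c (p 0) \<otimes>\<^bsub>G\<^esub> u p \<otimes>\<^bsub>G\<^esub> inv\<^bsub>G\<^esub> (c (p 1)))"

definition orbit1 :: "'a topology \<Rightarrow> 'a \<Rightarrow> ('g, 'm) monoid_scheme \<Rightarrow> ((real \<Rightarrow> 'a) \<Rightarrow> 'g)
     \<Rightarrow> ((real \<Rightarrow> 'a) \<Rightarrow> 'g) set" where
  "orbit1 W b G u = {cochain_act W G c u | c. c \<in> cochain0 W b G}"

definition H1 :: "'a topology \<Rightarrow> 'a \<Rightarrow> ('g, 'm) monoid_scheme \<Rightarrow> ((real \<Rightarrow> 'a) \<Rightarrow> 'g) set set" where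
  "H1 W b G = orbit1 W b G ` cocycle1 W b G"

definition res1 :: "'a topology \<Rightarrow> 'a \<Rightarrow> ('g, 'm) monoid_scheme \<Rightarrow> 'a set
     \<Rightarrow> ((real \<Rightarrow> 'a) \<Rightarrow> 'g) set \<Rightarrow> ((real \<Rightarrow> 'a) \<Rightarrow> 'g) set" where
  "res1 W b G A h = orbit1 (subtopology W A) b G
      (restrict (SOME u. u \<in> h) (Collect (pathin (subtopology W A))))"

end

theory Submission
  imports Defs
begin

definition subp :: "(real \<Rightarrow> 'a) \<Rightarrow> real \<Rightarrow> real \<Rightarrow> real \<Rightarrow> 'a" where
  "subp q r t = q \<circ> linepath r t"

lemma subp_apply: "subp q r t x = q ((1 - x) * r + x * t)"
  by (simp add: subp_def linepath_def)

lemma path_image_linepath01: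
  assumes "r \<in> {0..1}" "t \<in> {0..1::real}"
  shows "path_image (linepath r t) \<subseteq> {0..1}"
  using assms by (simp add: closed_segment_subset convex_real_interval)

lemma pathin_linepath01:
  assumes "r \<in> {0..1}" "t \<in> {0..1::real}"
  shows "pathin (top_of_set {0..1}) (linepath r t)"
  using path_image_linepath01[OF assms]
  by (auto simp: pathin_canon_iff path_image_def)

lemma pathin_subp:
  assumes "pathin W q" "r \<in> {0..1}" "t \<in> {0..1::real}"
  shows "pathin W (subp q r t)"
  unfolding subp_def
  by (rule pathin_compose[OF pathin_linepath01[OF assms(2,3)]]) (use assms(1) in \<open>simp add: pathin_def\<close>)

lemma pathin_comp_path:
  fixes \<sigma> :: "real \<Rightarrow> 'b::real_normed_vector"
  assumes "continuous_map (top_of_set S) W f" "path \<sigma>" "path_image \<sigma> \<subseteq> S"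
  shows "pathin W (f \<circ> \<sigma>)"
  by (rule pathin_compose[OF _ assms(1)]) (use assms(2,3) in \<open>auto simp: pathin_canon_iff path_image_def\<close>)

lemma CL:
  fixes \<sigma>1 \<sigma>2 :: "real \<Rightarrow> 'b::real_normed_vector"
  assumes S: "convex S" and f: "continuous_map (top_of_set S) W f"
    and p: "path \<sigma>1" "path \<sigma>2" "path_image \<sigma>1 \<subseteq> S" "path_image \<sigma>2 \<subseteq> S"
    and e: "\<sigma>1 0 = \<sigma>2 0" "\<sigma>1 1 = \<sigma>2 1"
  shows "path_homotopic W (f \<circ> \<sigma>1) (f \<circ> \<sigma>2)"
proof -
  have "homotopic_paths S \<sigma>1 \<sigma>2"
  proof (rule homotopic_paths_linear)
    show "pathstart \<sigma>2 = pathstart \<sigma>1" "pathfinish \<sigma>2 = pathfinish \<sigma>1"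
      using e by (auto simp: pathstart_def pathfinish_def)
    fix t :: real assume "t \<in> {0..1}"
    then have "\<sigma>1 t \<in> S" "\<sigma>2 t \<in> S" using p by (auto simp: path_image_def)
    then show "closed_segment (\<sigma>1 t) (\<sigma>2 t) \<subseteq> S" using S by (simp add: closed_segment_subset)
  qed (use p in auto)
  then have "homotopic_with (\<lambda>h. h 0 = (f \<circ> \<sigma>1) 0 \<and> h 1 = (f \<circ> \<sigma>1) 1) (top_of_set {0..1}) W
               (f \<circ> \<sigma>1) (f \<circ> \<sigma>2)"
    unfolding homotopic_paths_def
    by (rule homotopic_with_compose_continuous_map_left[OF _ f])
       (auto simp: pathstart_def pathfinish_def)
  then show ?thesis by (simp add: path_homotopic_def)
qed

lemma path_cat_comp:
  "path_cat (f \<circ> \<sigma>1) (f \<circ> \<sigma>2) = f \<circ> (\<sigma>1 +++ \<sigma>2)"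
  by (rule ext) (simp add: path_cat_def joinpaths_def)

lemma path_cat_0 [simp]: "path_cat p q 0 = p 0"
  by (simp add: path_cat_def)

lemma path_cat_1 [simp]: "path_cat p q 1 = q 1"
  by (simp add: path_cat_def)

lemma pathin_cat:
  assumes p: "pathin W p" and q: "pathin W q" and e: "p 1 = q 0"
  shows "pathin W (path_cat p q)"
proof -
  have c1: "continuous_map (top_of_set {0..1/2::real}) (top_of_set {0..1}) (\<lambda>x. 2 * x)"
    by (auto intro!: continuous_intros)
  have f1: "continuous_map (top_of_set {0..1/2::real}) W (\<lambda>x. p (2 * x))"
    using continuous_map_compose[OF c1 p[unfolded pathin_def]] by (simp add: o_def)
  have c2: "continuous_map (top_of_set {1/2..1::real}) (top_of_set {0..1}) (\<lambda>x. 2 * x - 1)"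
    by (auto intro!: continuous_intros)
  have f2: "continuous_map (top_of_set {1/2..1::real}) W (\<lambda>x. q (2 * x - 1))"
    using continuous_map_compose[OF c2 q[unfolded pathin_def]] by (simp add: o_def)
  have eqs: "{0..1} \<inter> {x. 0 \<le> x \<and> x \<le> 1 \<and> x * 2 \<le> 1} = {0..1/2::real}"
     "{0..1} \<inter> {x. 0 \<le> x \<and> x \<le> 1 \<and> 1 \<le> x * 2} = {1/2..1::real}" by auto
  have "continuous_map (top_of_set {0..1}) W (\<lambda>x. if x \<le> 1/2 then p (2 * x) else q (2 * x - 1))"
    apply (rule continuous_map_cases_le[where p = "\<lambda>x. x" and q = "\<lambda>x. 1/2"])
    apply (simp_all add: subtopology_subtopology f1 f2 eqs continuous_map_from_subtopology)
    subgoal for x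
      using e by (simp add: mult.commute)
    done
  then show ?thesis by (simp add: pathin_def path_cat_def)
qed

fun gprod :: "('g, 'm) monoid_scheme \<Rightarrow> (nat \<Rightarrow> 'g) \<Rightarrow> nat \<Rightarrow> 'g" where
  "gprod G f 0 = \<one>\<^bsub>G\<^esub>"
| "gprod G f (Suc n) = gprod G f n \<otimes>\<^bsub>G\<^esub> f n"

context group
begin

lemma gprod_closed: "(\<And>i. i < n \<Longrightarrow> f i \<in> carrier G) \<Longrightarrow> gprod G f n \<in> carrier G"
  by (induction n) auto

lemma gprod_cong: "(\<And>i. i < n \<Longrightarrow> f i = g i) \<Longrightarrow> gprod G f n = gprod G g n"
  by (induction n) auto

lemma gprod_add:
  "(\<And>i. i < n + m \<Longrightarrow> f i \<in> carrier G) \<Longrightarrow>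
     gprod G f (n + m) = gprod G f n \<otimes> gprod G (\<lambda>i. f (n + i)) m"
proof (induction m)
  case 0
  then show ?case by (simp add: gprod_closed)
next
  case (Suc m)
  have "gprod G f (n + Suc m) = gprod G f (n + m) \<otimes> f (n + m)" by simp
  also have "\<dots> = gprod G f n \<otimes> gprod G (\<lambda>i. f (n + i)) m \<otimes> f (n + m)"
    using Suc by simp
  also have "\<dots> = gprod G f n \<otimes> gprod G (\<lambda>i. f (n + i)) (Suc m)"
    using Suc.prems by (simp add: m_assoc gprod_closed)
  finally show ?case .
qed

lemma gprod_mult:
  "(\<And>i. i < n * m \<Longrightarrow> f i \<in> carrier G) \<Longrightarrow>
     gprod G f (n * m) = gprod G (\<lambda>i. gprod G (\<lambda>j. f (i * m + j)) m) n"
proof (induction n)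
  case 0
  then show ?case by simp
next
  case (Suc n)
  have "gprod G f (Suc n * m) = gprod G f (n * m + m)" by (simp add: add.commute)
  also have "\<dots> = gprod G f (n * m) \<otimes> gprod G (\<lambda>j. f (n * m + j)) m"
    by (rule gprod_add) (use Suc.prems in \<open>simp add: add.commute\<close>)
  also have "\<dots> = gprod G (\<lambda>i. gprod G (\<lambda>j. f (i * m + j)) m) (Suc n)"
    using Suc by simp
  finally show ?case .
qed

lemma gprod_tele:
  assumes "\<And>i. i < n \<Longrightarrow> b i \<in> carrier G" "\<And>i. i \<le> n \<Longrightarrow> a i \<in> carrier G"
    "\<And>i. i < n \<Longrightarrow> t i \<in> carrier G" "\<And>i. i < n \<Longrightarrow> b i \<otimes> a (Suc i) = a i \<otimes> t i"
  shows "gprod G b n \<otimes> a n = a 0 \<otimes> gprod G t n"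
  using assms
proof (induction n)
  case 0
  then show ?case by simp
next
  case (Suc n)
  have IH: "gprod G b n \<otimes> a n = a 0 \<otimes> gprod G t n"
    using Suc by simp
  have cb: "gprod G b n \<in> carrier G" "gprod G t n \<in> carrier G"
    using Suc.prems by (auto intro!: gprod_closed)
  have "gprod G b (Suc n) \<otimes> a (Suc n) = gprod G b n \<otimes> (b n \<otimes> a (Suc n))"
    using Suc.prems cb by (simp add: m_assoc)
  also have "\<dots> = gprod G b n \<otimes> (a n \<otimes> t n)" using Suc.prems by simp
  also have "\<dots> = (gprod G b n \<otimes> a n) \<otimes> t n" using Suc.prems cb by (simp add: m_assoc)
  also have "\<dots> = a 0 \<otimes> gprod G t (Suc n)" using IH Suc.prems cb by (simp add: m_assoc)
  finally show ?case .
qed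

end

lemma cocycle_carrier: "u \<in> cocycle1 W b G \<Longrightarrow> pathin W p \<Longrightarrow> u p \<in> carrier G"
  by (auto simp: cocycle1_def)

lemma cocycle_ext: "u \<in> cocycle1 W b G \<Longrightarrow> \<not> pathin W p \<Longrightarrow> u p = undefined"
  by (auto simp: cocycle1_def PiE_def extensional_def)

lemma cocycle_htp: "u \<in> cocycle1 W b G \<Longrightarrow> pathin W p \<Longrightarrow> pathin W q \<Longrightarrow> path_homotopic W p q \<Longrightarrow> u p = u q"
  by (auto simp: cocycle1_def)

lemma cocycle_cat: "u \<in> cocycle1 W b G \<Longrightarrow> pathin W p \<Longrightarrow> pathin W q \<Longrightarrow> p 1 = q 0 \<Longrightarrow>
   u (path_cat p q) = u p \<otimes>\<^bsub>G\<^esub> u q"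
  by (auto simp: cocycle1_def)

context group
begin

lemma cocycle_const:
  assumes u: "u \<in> cocycle1 W b G" and a: "a \<in> topspace W"
  shows "u (\<lambda>t. a) = \<one>"
proof -
  have "path_cat (\<lambda>t. a) (\<lambda>t. a) = (\<lambda>t. a)" by (simp add: path_cat_def)
  then have "u (\<lambda>t. a) = u (\<lambda>t. a) \<otimes> u (\<lambda>t. a)"
    using cocycle_cat[OF u, of "\<lambda>t. a" "\<lambda>t. a"] a by simp
  moreover have "u (\<lambda>t. a) \<in> carrier G" using cocycle_carrier[OF u] a by simp
  ultimately show ?thesis
    by simp
qed

lemma htp_eq01:
  assumes "pathin W p" "\<And>x. x \<in> {0..1} \<Longrightarrow> q x = p x"
  shows "pathin W q \<and> path_homotopic W q p"
proof
  show q: "pathin W q"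
    unfolding pathin_def by (rule continuous_map_eq[of _ _ p]) (use assms in \<open>auto simp: pathin_def\<close>)
  show "path_homotopic W q p"
    unfolding path_homotopic_def
    by (rule homotopic_with_equal) (use assms q in \<open>auto simp: pathin_def\<close>)
qed

lemma cocycle_eq01:
  assumes "u \<in> cocycle1 W b G" "pathin W p" "\<And>x. x \<in> {0..1} \<Longrightarrow> q x = p x"
  shows "pathin W q \<and> u q = u p"
  using htp_eq01[OF assms(2,3)] cocycle_htp[OF assms(1)] assms(2) by blast

lemma cocycle_split:
  assumes u: "u \<in> cocycle1 W b G" and q: "pathin W q"
    and rst: "r \<in> {0..1}" "s \<in> {0..1}" "t \<in> {0..1::real}"
  shows "u (subp q r t) = u (subp q r s) \<otimes> u (subp q s t)"
proof -
  have qc: "continuous_map (top_of_set {0..1}) W q" using q by (simp add: pathin_def)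
  have h: "path_homotopic W (q \<circ> linepath r t) (q \<circ> (linepath r s +++ linepath s t))"
  proof (rule CL[OF convex_real_interval(5) qc])
    show "path_image (linepath r s +++ linepath s t) \<subseteq> {0..1}"
      using path_image_linepath01 rst by (simp add: path_image_join)
    show "path_image (linepath r t) \<subseteq> {0..1}" using path_image_linepath01 rst by simp
    show "path (linepath r s +++ linepath s t)" by simp
    show "linepath r t 0 = (linepath r s +++ linepath s t) 0" "linepath r t 1 = (linepath r s +++ linepath s t) 1"
      by (simp_all add: joinpaths_def linepath_def)
  qed simp
  have p2: "pathin W (q \<circ> (linepath r s +++ linepath s t))"
    by (rule pathin_comp_path[OF qc]) (use rst path_image_linepath01 in \<open>auto simp: path_image_join\<close>)
  have "u (subp q r t) = u (q \<circ> (linepath r s +++ linepath s t))"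
    using cocycle_htp[OF u _ p2 h] pathin_subp[OF q rst(1,3)] by (simp add: subp_def)
  also have "\<dots> = u (path_cat (subp q r s) (subp q s t))"
    by (simp add: subp_def path_cat_comp)
  also have "\<dots> = u (subp q r s) \<otimes> u (subp q s t)"
    by (rule cocycle_cat[OF u]) (use pathin_subp q rst in \<open>auto simp: subp_apply\<close>)
  finally show ?thesis .
qed

end

lemma subp_0_1 [simp]: "subp q 0 1 = q"
  by (rule ext) (simp add: subp_apply)

lemma subp_same: "subp q r r = (\<lambda>x. q r)"
  by (rule ext) (simp add: subp_apply algebra_simps)

lemma subp_subp: "subp (subp q r t) r' t' = subp q ((1 - r') * r + r' * t) ((1 - t') * r + t' * t)"
  by (rule ext) (simp add: subp_apply algebra_simps)

context group
begin

lemma cocycle_subdiv: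
  assumes u: "u \<in> cocycle1 W b G" and q: "pathin W q" and m: "0 < m"
  shows "u q = gprod G (\<lambda>j. u (subp q (real j / real m) (real (Suc j) / real m))) m"
proof -
  have "k \<le> m \<Longrightarrow> u (subp q 0 (real k / real m)) = gprod G (\<lambda>j. u (subp q (real j / real m) (real (Suc j) / real m))) k" for k
  proof (induction k)
    case 0
    then show ?case using cocycle_const[OF u] path_start_in_topspace[OF q] by (simp add: subp_same)
  next
    case (Suc k)
    have r: "real k / real m \<in> {0..1}" "real (Suc k) / real m \<in> {0..1}" using Suc.prems m by auto
    have "u (subp q 0 (real (Suc k) / real m)) = u (subp q 0 (real k / real m)) \<otimes> u (subp q (real k / real m) (real (Suc k) / real m))"
      by (rule cocycle_split[OF u q]) (use r in auto)
    then show ?case using Suc by simp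
  qed
  from this[of m] m show ?thesis by simp
qed

end



context group
begin

lemma inv_cancel_left: "m \<in> carrier G \<Longrightarrow> z \<in> carrier G \<Longrightarrow> inv m \<otimes> (m \<otimes> z) = z"
  by (simp add: m_assoc[symmetric])

lemma inv_cancel_left': "m \<in> carrier G \<Longrightarrow> z \<in> carrier G \<Longrightarrow> m \<otimes> (inv m \<otimes> z) = z"
  by (simp add: m_assoc[symmetric])

lemma cochain0_carrier: "c \<in> cochain0 W b G \<Longrightarrow> x \<in> topspace W \<Longrightarrow> c x \<in> carrier G"
  by (auto simp: cochain0_def)

lemma cochain0_b: "c \<in> cochain0 W b G \<Longrightarrow> c b = \<one>"
  by (auto simp: cochain0_def)

lemma cochain0_ext: "c \<in> cochain0 W b G \<Longrightarrow> x \<notin> topspace W \<Longrightarrow> c x = undefined"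
  by (auto simp: cochain0_def PiE_def extensional_def)

lemma act_apply: "pathin W p \<Longrightarrow> cochain_act W G c u p = c (p 0) \<otimes> u p \<otimes> inv (c (p 1))"
  by (simp add: cochain_act_def)

lemma act_apply_ext: "\<not> pathin W p \<Longrightarrow> cochain_act W G c u p = undefined"
  by (simp add: cochain_act_def)

lemma path_homotopic_ends: "path_homotopic W p q \<Longrightarrow> q 0 = p 0 \<and> q 1 = p 1"
proof -
  assume "path_homotopic W p q"
  from homotopic_with_imp_property[OF this[unfolded path_homotopic_def]]
  show "q 0 = p 0 \<and> q 1 = p 1" by simp
qed

lemma act_cocycle:
  assumes u: "u \<in> cocycle1 W b G" and c: "c \<in> cochain0 W b G" and b: "b \<in> topspace W"
  shows "cochain_act W G c u \<in> cocycle1 W b G"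
  unfolding cocycle1_def
proof (intro CollectI conjI allI impI)
  show "cochain_act W G c u \<in> Collect (pathin W) \<rightarrow>\<^sub>E carrier G"
    unfolding cochain_act_def restrict_PiE_iff
  proof
    fix p assume "p \<in> Collect (pathin W)"
    then have p: "pathin W p" by simp
    show "c (p 0) \<otimes> u p \<otimes> inv c (p 1) \<in> carrier G"
      using cochain0_carrier[OF c path_start_in_topspace[OF p]] cochain0_carrier[OF c path_finish_in_topspace[OF p]]
        cocycle_carrier[OF u p] by simp
  qed
  show "cochain_act W G c u (\<lambda>t. b) = \<one>"
    using b cochain0_b[OF c] cocycle_const[OF u b] by (simp add: act_apply)
next
  fix p q assume pq: "pathin W p \<and> pathin W q \<and> path_homotopic W p q"
  then show "cochain_act W G c u p = cochain_act W G c u q"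
  proof -
    have e: "u p = u q" using cocycle_htp[OF u] pq by blast
    have "q 0 = p 0" "q 1 = p 1" using path_homotopic_ends[of W p q] pq by auto
    then show ?thesis using e pq by (simp add: act_apply)
  qed
next
  fix p q assume pq: "pathin W p \<and> pathin W q \<and> p 1 = q 0"
  then have pc: "pathin W (path_cat p q)" using pathin_cat by blast
  have cs: "c (p 0) \<in> carrier G" "c (q 0) \<in> carrier G" "c (q 1) \<in> carrier G" "u p \<in> carrier G" "u q \<in> carrier G"
    using pq cochain0_carrier[OF c path_start_in_topspace] cochain0_carrier[OF c path_finish_in_topspace] cocycle_carrier[OF u] by auto
  show "cochain_act W G c u (path_cat p q) = cochain_act W G c u p \<otimes> cochain_act W G c u q"
  proof -
    have "cochain_act W G c u (path_cat p q) = c (p 0) \<otimes> (u p \<otimes> u q) \<otimes> inv (c (q 1))"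
      using pq pc cocycle_cat[OF u, of p q] by (simp add: act_apply)
    also have "\<dots> = (c (p 0) \<otimes> u p \<otimes> inv (c (q 0))) \<otimes> (c (q 0) \<otimes> u q \<otimes> inv (c (q 1)))"
      using cs by (simp add: m_assoc inv_cancel_left)
    finally show ?thesis using pq by (simp add: act_apply)
  qed
qed

lemma one_cochain: "b \<in> topspace W \<Longrightarrow> (\<lambda>x\<in>topspace W. \<one>) \<in> cochain0 W b G"
  by (auto simp: cochain0_def)

lemma act_one:
  assumes u: "u \<in> cocycle1 W b G"
  shows "cochain_act W G (\<lambda>x\<in>topspace W. \<one>) u = u"
proof
  fix p show "cochain_act W G (\<lambda>x\<in>topspace W. \<one>) u p = u p"
  proof (cases "pathin W p")
    case True
    then show ?thesis using cocycle_carrier[OF u True] path_start_in_topspace[OF True] path_finish_in_topspace[OF True]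
      by (simp add: act_apply)
  next
    case False
    then show ?thesis using cocycle_ext[OF u False] by (simp add: act_apply_ext)
  qed
qed

lemma mult_cochain: "c \<in> cochain0 W b G \<Longrightarrow> c' \<in> cochain0 W b G \<Longrightarrow> (\<lambda>x\<in>topspace W. c x \<otimes> c' x) \<in> cochain0 W b G"
  by (auto simp: cochain0_def)

lemma inv_cochain: "c \<in> cochain0 W b G \<Longrightarrow> (\<lambda>x\<in>topspace W. inv (c x)) \<in> cochain0 W b G"
  by (auto simp: cochain0_def)

lemma act_act:
  assumes u: "u \<in> cocycle1 W b G" and c: "c \<in> cochain0 W b G" and c': "c' \<in> cochain0 W b G"
  shows "cochain_act W G c (cochain_act W G c' u) = cochain_act W G (\<lambda>x\<in>topspace W. c x \<otimes> c' x) u"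
proof
  fix p show "cochain_act W G c (cochain_act W G c' u) p = cochain_act W G (\<lambda>x\<in>topspace W. c x \<otimes> c' x) u p"
  proof (cases "pathin W p")
    case True
    have cs: "c (p 0) \<in> carrier G" "c (p 1) \<in> carrier G" "c' (p 0) \<in> carrier G" "c' (p 1) \<in> carrier G" "u p \<in> carrier G"
      using True cochain0_carrier[OF c] cochain0_carrier[OF c'] cocycle_carrier[OF u] path_start_in_topspace path_finish_in_topspace by blast+
    then show ?thesis using True path_start_in_topspace[OF True] path_finish_in_topspace[OF True]
      by (simp add: act_apply m_assoc inv_mult_group)
  qed (simp add: act_apply_ext)
qed

lemma act_inv:
  assumes u: "u \<in> cocycle1 W b G" and c: "c \<in> cochain0 W b G"
  shows "cochain_act W G (\<lambda>x\<in>topspace W. inv (c x)) (cochain_act W G c u) = u"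
proof -
  have "(\<lambda>x\<in>topspace W. (\<lambda>x\<in>topspace W. inv (c x)) x \<otimes> c x) = (\<lambda>x\<in>topspace W. \<one>)"
    using cochain0_carrier[OF c] by (auto simp: fun_eq_iff)
  then show ?thesis using act_act[OF u inv_cochain[OF c] c] act_one[OF u] by simp
qed

lemma orbit_self: "b \<in> topspace W \<Longrightarrow> u \<in> cocycle1 W b G \<Longrightarrow> u \<in> orbit1 W b G u"
proof -
  assume b: "b \<in> topspace W" and u: "u \<in> cocycle1 W b G"
  have "cochain_act W G (\<lambda>x\<in>topspace W. \<one>) u = u" by (rule act_one[OF u])
  then show "u \<in> orbit1 W b G u" unfolding orbit1_def
    by (intro CollectI exI[where x="\<lambda>x\<in>topspace W. \<one>"]) (simp add: one_cochain[OF b])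
qed

lemma orbit_cocycle: "b \<in> topspace W \<Longrightarrow> u \<in> cocycle1 W b G \<Longrightarrow> w \<in> orbit1 W b G u \<Longrightarrow> w \<in> cocycle1 W b G"
proof -
  assume b: "b \<in> topspace W" and u: "u \<in> cocycle1 W b G" and w: "w \<in> orbit1 W b G u"
  then obtain c where "c \<in> cochain0 W b G" "w = cochain_act W G c u" by (auto simp: orbit1_def)
  then show ?thesis using act_cocycle[OF u _ b] by simp
qed

lemma orbit_eq:
  assumes b: "b \<in> topspace W" and u: "u \<in> cocycle1 W b G" and w: "w \<in> orbit1 W b G u"
  shows "orbit1 W b G w = orbit1 W b G u"
proof -
  obtain c where c: "c \<in> cochain0 W b G" and wc: "w = cochain_act W G c u"
    using w by (auto simp: orbit1_def)
  show ?thesis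
  proof
    show "orbit1 W b G w \<subseteq> orbit1 W b G u"
    proof
      fix z assume "z \<in> orbit1 W b G w"
      then obtain d where d: "d \<in> cochain0 W b G" and z: "z = cochain_act W G d w"
        by (auto simp: orbit1_def)
      have "z = cochain_act W G (\<lambda>x\<in>topspace W. d x \<otimes> c x) u"
        using z wc act_act[OF u d c] by simp
      then show "z \<in> orbit1 W b G u" unfolding orbit1_def using mult_cochain[OF d c] by blast
    qed
    show "orbit1 W b G u \<subseteq> orbit1 W b G w"
    proof
      fix z assume "z \<in> orbit1 W b G u"
      then obtain d where d: "d \<in> cochain0 W b G" and z: "z = cochain_act W G d u"
        by (auto simp: orbit1_def)
      have "z = cochain_act W G d (cochain_act W G (\<lambda>x\<in>topspace W. inv (c x)) w)"
        using act_inv[OF u c] z wc by simp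
      also have "\<dots> = cochain_act W G (\<lambda>x\<in>topspace W. d x \<otimes> (\<lambda>x\<in>topspace W. inv (c x)) x) w"
        using act_act[OF act_cocycle[OF u c b] d inv_cochain[OF c]] wc by simp
      finally show "z \<in> orbit1 W b G w"
        unfolding orbit1_def using mult_cochain[OF d inv_cochain[OF c]] by blast
    qed
  qed
qed

lemma H1_elem:
  assumes b: "b \<in> topspace W" and h: "h \<in> H1 W b G" and w: "w \<in> h"
  shows "w \<in> cocycle1 W b G \<and> orbit1 W b G w = h"
proof -
  obtain u where u: "u \<in> cocycle1 W b G" and hu: "h = orbit1 W b G u"
    using h by (auto simp: H1_def)
  have "w \<in> orbit1 W b G u" using w hu by simp
  then show ?thesis using orbit_cocycle[OF b u] orbit_eq[OF b u] hu by simp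
qed

lemma H1_some:
  assumes b: "b \<in> topspace W" and h: "h \<in> H1 W b G"
  shows "(SOME u. u \<in> h) \<in> h"
proof -
  obtain u where u: "u \<in> cocycle1 W b G" and hu: "h = orbit1 W b G u"
    using h by (auto simp: H1_def)
  then have "u \<in> h" using orbit_self[OF b u] by simp
  then show ?thesis using someI[of "\<lambda>u. u \<in> h" u] by simp
qed

lemma orbit_in_H1: "u \<in> cocycle1 W b G \<Longrightarrow> orbit1 W b G u \<in> H1 W b G"
  by (simp add: H1_def)

lemma orbit_eq_iff:
  assumes b: "b \<in> topspace W" and u: "u \<in> cocycle1 W b G" and u': "u' \<in> cocycle1 W b G"
  shows "orbit1 W b G u = orbit1 W b G u' \<longleftrightarrow> u \<in> orbit1 W b G u'"
proof
  assume "orbit1 W b G u = orbit1 W b G u'"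
  then show "u \<in> orbit1 W b G u'" using orbit_self[OF b u] by simp
next
  assume "u \<in> orbit1 W b G u'"
  then show "orbit1 W b G u = orbit1 W b G u'" by (rule orbit_eq[OF b u'])
qed

lemma path_homotopic_subtop: "path_homotopic (subtopology W A) p q \<Longrightarrow> path_homotopic W p q"
  unfolding path_homotopic_def homotopic_with_def by (auto simp: continuous_map_in_subtopology)

lemma restr_cocycle:
  assumes u: "u \<in> cocycle1 W b G" and bA: "b \<in> A" and b: "b \<in> topspace W"
  shows "restrict u (Collect (pathin (subtopology W A))) \<in> cocycle1 (subtopology W A) b G"
  unfolding cocycle1_def
proof (intro CollectI conjI allI impI)
  show "restrict u (Collect (pathin (subtopology W A))) \<in> Collect (pathin (subtopology W A)) \<rightarrow>\<^sub>E carrier G"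
    unfolding restrict_PiE_iff using cocycle_carrier[OF u] by (simp add: pathin_subtopology)
  show "restrict u (Collect (pathin (subtopology W A))) (\<lambda>t. b) = \<one>"
    using cocycle_const[OF u b] b bA by simp
next
  fix p q
  show "pathin (subtopology W A) p \<and> pathin (subtopology W A) q \<and> path_homotopic (subtopology W A) p q \<Longrightarrow> restrict u (Collect (pathin (subtopology W A))) p = restrict u (Collect (pathin (subtopology W A))) q"
  proof -
    assume a: "pathin (subtopology W A) p \<and> pathin (subtopology W A) q \<and> path_homotopic (subtopology W A) p q"
    then have "u p = u q" using cocycle_htp[OF u, of p q] path_homotopic_subtop[of W A p q] by (simp add: pathin_subtopology)
    then show ?thesis using a by simp
  qed
next
  fix p q assume pq: "pathin (subtopology W A) p \<and> pathin (subtopology W A) q \<and> p 1 = q 0"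
  then have "pathin (subtopology W A) (path_cat p q)" using pathin_cat by blast
  then show "restrict u (Collect (pathin (subtopology W A))) (path_cat p q) =
    restrict u (Collect (pathin (subtopology W A))) p \<otimes> restrict u (Collect (pathin (subtopology W A))) q"
    using pq cocycle_cat[OF u, of p q] by (auto simp: pathin_subtopology)
qed

lemma restr_cochain:
  assumes c: "c \<in> cochain0 W b G" and bA: "b \<in> A"
  shows "restrict c (topspace (subtopology W A)) \<in> cochain0 (subtopology W A) b G"
  using c bA by (auto simp: cochain0_def)

lemma restr_act:
  assumes c: "c \<in> cochain0 W b G"
  shows "restrict (cochain_act W G c u) (Collect (pathin (subtopology W A))) =
    cochain_act (subtopology W A) G (restrict c (topspace (subtopology W A))) (restrict u (Collect (pathin (subtopology W A))))"
proof
  fix p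
  show "restrict (cochain_act W G c u) (Collect (pathin (subtopology W A))) p =
    cochain_act (subtopology W A) G (restrict c (topspace (subtopology W A))) (restrict u (Collect (pathin (subtopology W A)))) p"
  proof (cases "pathin (subtopology W A) p")
    case True
    then have "p 0 \<in> topspace (subtopology W A)" "p 1 \<in> topspace (subtopology W A)" "pathin W p"
      using path_start_in_topspace path_finish_in_topspace pathin_subtopology by blast+
    then show ?thesis using True by (simp add: act_apply)
  qed (simp add: act_apply_ext)
qed

lemma res1_rep:
  assumes b: "b \<in> topspace W" and bA: "b \<in> A" and h: "h \<in> H1 W b G" and u: "u \<in> h"
  shows "res1 W b G A h = orbit1 (subtopology W A) b G (restrict u (Collect (pathin (subtopology W A))))"
proof -
  have b': "b \<in> topspace (subtopology W A)" using b bA by simp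
  let ?w = "SOME u. u \<in> h"
  have w: "?w \<in> h" by (rule H1_some[OF b h])
  have uc: "u \<in> cocycle1 W b G" "orbit1 W b G u = h" using H1_elem[OF b h u] by auto
  then have "?w \<in> orbit1 W b G u" using w by simp
  then obtain c where c: "c \<in> cochain0 W b G" and wc: "?w = cochain_act W G c u"
    by (auto simp: orbit1_def)
  have "restrict ?w (Collect (pathin (subtopology W A))) \<in> orbit1 (subtopology W A) b G (restrict u (Collect (pathin (subtopology W A))))"
    unfolding wc restr_act[OF c] orbit1_def using restr_cochain[OF c bA] by blast
  then show ?thesis
    unfolding res1_def by (rule orbit_eq[OF b' restr_cocycle[OF uc(1) bA b]])
qed

lemma res1_in_H1:
  assumes b: "b \<in> topspace W" and bA: "b \<in> A" and h: "h \<in> H1 W b G"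
  shows "res1 W b G A h \<in> H1 (subtopology W A) b G"
proof -
  have "(SOME u. u \<in> h) \<in> cocycle1 W b G" using H1_elem[OF b h H1_some[OF b h]] by blast
  then show ?thesis
    unfolding res1_rep[OF b bA h H1_some[OF b h]] by (rule orbit_in_H1[OF restr_cocycle[OF _ bA b]])
qed

lemma res1_res1:
  assumes b: "b \<in> topspace W" and bB: "b \<in> B" and BA: "B \<subseteq> A" and h: "h \<in> H1 W b G"
  shows "res1 (subtopology W A) b G B (res1 W b G A h) = res1 W b G B h"
proof -
  have bA: "b \<in> A" using bB BA by blast
  obtain u where u: "u \<in> h" using H1_some[OF b h] by blast
  have uc: "u \<in> cocycle1 W b G" using H1_elem[OF b h u] by blast
  let ?uA = "restrict u (Collect (pathin (subtopology W A)))"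
  have b': "b \<in> topspace (subtopology W A)" using b bA by simp
  have r1: "res1 W b G A h = orbit1 (subtopology W A) b G ?uA" by (rule res1_rep[OF b bA h u])
  have uA: "?uA \<in> cocycle1 (subtopology W A) b G" by (rule restr_cocycle[OF uc bA b])
  have "res1 (subtopology W A) b G B (res1 W b G A h) =
     orbit1 (subtopology (subtopology W A) B) b G (restrict ?uA (Collect (pathin (subtopology (subtopology W A) B))))"
    unfolding r1 by (rule res1_rep[OF b' bB orbit_in_H1[OF uA] orbit_self[OF b' uA]])
  also have "subtopology (subtopology W A) B = subtopology W B"
    using BA by (simp add: subtopology_subtopology Int_absorb1)
  also have "restrict ?uA (Collect (pathin (subtopology W B))) = restrict u (Collect (pathin (subtopology W B)))"
    using BA by (auto simp: fun_eq_iff pathin_subtopology)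
  finally show ?thesis using res1_rep[OF b bB h u] by (simp add: restrict_def)
qed

end


lemma between01:
  fixes x r t :: real
  assumes "0 \<le> x" "x \<le> 1" "r \<le> t"
  shows "r \<le> (1 - x) * r + x * t \<and> (1 - x) * r + x * t \<le> t"
proof -
  have e: "(1 - x) * r + x * t = r + x * (t - r)" by (simp add: algebra_simps)
  have "0 \<le> x * (t - r)" using assms by simp
  moreover have "x * (t - r) \<le> t - r" using assms by (intro mult_left_le_one_le) auto
  ultimately show ?thesis unfolding e by linarith
qed

lemma lebesgue_gen:
  fixes S :: "'b::metric_space set"
  assumes S: "compact S" and f: "continuous_map (top_of_set S) X f"
    and opn: "\<And>U. U \<in> \<U> \<Longrightarrow> openin X U" and cover: "\<Union>\<U> = topspace X" and ne: "\<U> \<noteq> {}"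
  obtains \<delta> where "0 < \<delta>" "\<And>T. T \<subseteq> S \<Longrightarrow> diameter T < \<delta> \<Longrightarrow> \<exists>U\<in>\<U>. \<forall>z\<in>T. f z \<in> U"
proof -
  define C where "C = {B. open B \<and> (\<exists>U\<in>\<U>. \<forall>z\<in>S \<inter> B. f z \<in> U)}"
  obtain U0 where "U0 \<in> \<U>" using ne by auto
  then have "{} \<in> C" unfolding C_def by auto
  then have Cne: "C \<noteq> {}" by auto
  have Cov: "S \<subseteq> \<Union>C"
  proof
    fix z assume z: "z \<in> S"
    then have "f z \<in> topspace X" using f by (auto simp: continuous_map_def)
    then obtain U where U: "U \<in> \<U>" "f z \<in> U" using cover by auto
    have "openin (top_of_set S) {x \<in> topspace (top_of_set S). f x \<in> U}"
      by (rule openin_continuous_map_preimage[OF f opn[OF U(1)]])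
    then obtain T where T: "open T" "{x \<in> S. f x \<in> U} = S \<inter> T"
      by (auto simp: openin_open)
    have zT: "z \<in> T" using T(2) z U(2) by auto
    have "\<forall>y\<in>S \<inter> T. f y \<in> U" using T(2) by auto
    then have "T \<in> C" unfolding C_def using T(1) U(1) by auto
    then show "z \<in> \<Union>C" using zT by auto
  qed
  have Co: "\<And>B. B \<in> C \<Longrightarrow> open B" unfolding C_def by auto
  obtain \<delta> where d: "0 < \<delta>" "\<And>T. T \<subseteq> S \<Longrightarrow> diameter T < \<delta> \<Longrightarrow> \<exists>B \<in> C. T \<subseteq> B"
    using Lebesgue_number_lemma[OF S Cne Cov Co] by metis
  show ?thesis
  proof (rule that[OF d(1)])
    fix T assume T: "T \<subseteq> S" "diameter T < \<delta>"
    obtain B where B: "B \<in> C" "T \<subseteq> B" using d(2)[OF T(1) T(2)] by blast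
    then obtain U where U: "U \<in> \<U>" "\<forall>z\<in>S \<inter> B. f z \<in> U" unfolding C_def by auto
    have "\<forall>z\<in>T. f z \<in> U" using U(2) T(1) B(2) by auto
    then show "\<exists>U\<in>\<U>. \<forall>z\<in>T. f z \<in> U" using U(1) by auto
  qed
qed

definition smallp :: "'a topology \<Rightarrow> 'a set set \<Rightarrow> (real \<Rightarrow> 'a) \<Rightarrow> bool" where
  "smallp X \<U> q \<longleftrightarrow> (\<exists>U\<in>\<U>. pathin (subtopology X U) q)"

definition finep :: "'a topology \<Rightarrow> 'a set set \<Rightarrow> (real \<Rightarrow> 'a) \<Rightarrow> nat \<Rightarrow> bool" where
  "finep X \<U> p n \<longleftrightarrow> (\<forall>i<n. smallp X \<U> (subp p (real i / real n) (real (Suc i) / real n)))"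

lemma frac_01: "i < n \<Longrightarrow> real i / real n \<in> {0..1} \<and> real (Suc i) / real n \<in> {0..1}"
  by (auto simp: field_simps)

lemma frac_diff: "real (Suc i) / real n - real i / real n = 1 / real n"
  by (simp add: diff_divide_distrib[symmetric])

lemma frac_le: "0 < n \<Longrightarrow> real i / real n \<le> real (Suc i) / real n"
  by (simp add: divide_right_mono)

lemma lebesgue_path:
  assumes p: "pathin X p"
    and opn: "\<And>U. U \<in> \<U> \<Longrightarrow> openin X U" and cover: "\<Union>\<U> = topspace X" and ne: "\<U> \<noteq> {}"
  shows "\<exists>N. \<forall>n\<ge>N. 0 < n \<and> finep X \<U> p n"
proof -
  obtain \<delta> where d: "0 < \<delta>" "\<And>T. T \<subseteq> {0..1} \<Longrightarrow> diameter T < \<delta> \<Longrightarrow> \<exists>U\<in>\<U>. \<forall>z\<in>T. p z \<in> U"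
    using lebesgue_gen[OF compact_Icc p[unfolded pathin_def] opn cover ne] by blast
  obtain N :: nat where N: "1 / \<delta> < real N" using reals_Archimedean2 by blast
  have "0 < n \<and> finep X \<U> p n" if n: "N \<le> n" for n
  proof
    have "0 < real N" using N d(1) by (smt (verit) divide_pos_pos)
    then show n0: "0 < n" using n by simp
    have nd: "1 / real n < \<delta>"
    proof -
      have "1 / \<delta> < real n" using N n by linarith
      then show ?thesis using d(1) n0 by (simp add: field_simps)
    qed
    show "finep X \<U> p n"
      unfolding finep_def smallp_def
    proof (intro allI impI)
      fix i assume i: "i < n"
      let ?r = "real i / real n" and ?t = "real (Suc i) / real n"
      have rt: "?r \<in> {0..1}" "?t \<in> {0..1}" using frac_01[OF i] by auto
      have rlt: "?r \<le> ?t" using frac_le[OF n0] .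
      have "diameter {?r..?t} \<le> 1 / real n"
      proof (rule diameter_le)
        show "{?r..?t} \<noteq> {} \<or> 0 \<le> 1 / real n" by simp
        fix x y assume "x \<in> {?r..?t}" "y \<in> {?r..?t}"
        then have "\<bar>x - y\<bar> \<le> ?t - ?r" by auto
        also have "?t - ?r = 1 / real n" by (rule frac_diff)
        finally show "norm (x - y) \<le> 1 / real n" by simp
      qed
      moreover have "{?r..?t} \<subseteq> {0..1}" using rt by auto
      ultimately have "\<exists>U\<in>\<U>. \<forall>z\<in>{?r..?t}. p z \<in> U" using d(2)[of "{?r..?t}"] nd by linarith
      then obtain U where U: "U \<in> \<U>" "\<forall>z\<in>{?r..?t}. p z \<in> U" by blast
      have "pathin (subtopology X U) (subp p ?r ?t)"
        unfolding pathin_subtopology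
      proof
        show "pathin X (subp p ?r ?t)" by (rule pathin_subp[OF p rt])
        show "\<forall>x\<in>{0..1}. subp p ?r ?t x \<in> U"
          using U(2) between01[OF _ _ rlt] by (auto simp: subp_apply)
      qed
      then show "\<exists>U\<in>\<U>. pathin (subtopology X U) (subp p ?r ?t)" using U(1) by blast
    qed
  qed
  then show ?thesis by blast
qed

definition sq :: "nat \<Rightarrow> nat \<Rightarrow> nat \<Rightarrow> (real \<times> real) set" where
  "sq N j i = {real j / real N .. real (Suc j) / real N} \<times> {real i / real N .. real (Suc i) / real N}"

lemma sq_sub:
  assumes "j < N" "i < N"
  shows "sq N j i \<subseteq> {0..1} \<times> {0..1}"
proof -
  have a: "0 \<le> real j / real N" "real (Suc j) / real N \<le> 1" "0 \<le> real i / real N" "real (Suc i) / real N \<le> 1"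
    using frac_01[OF assms(1)] frac_01[OF assms(2)] by auto
  show ?thesis
  proof
    fix z assume "z \<in> sq N j i"
    then have z: "real j / real N \<le> fst z" "fst z \<le> real (Suc j) / real N"
      "real i / real N \<le> snd z" "snd z \<le> real (Suc i) / real N"
      unfolding sq_def by (auto simp del: of_nat_Suc)
    have "0 \<le> fst z" "fst z \<le> 1" "0 \<le> snd z" "snd z \<le> 1" using z a by linarith+
    then show "z \<in> {0..1} \<times> {0..1}" by (simp add: mem_Times_iff)
  qed
qed

lemma convex_sq: "convex (sq N j i)"
  by (simp add: sq_def convex_Times convex_real_interval)

lemma lebesgue_square:
  assumes h: "continuous_map (top_of_set ({0..1} \<times> {0..1})) X h"
    and opn: "\<And>U. U \<in> \<U> \<Longrightarrow> openin X U" and cover: "\<Union>\<U> = topspace X" and ne: "\<U> \<noteq> {}"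
  shows "\<exists>N>0. \<forall>j<N. \<forall>i<N. \<exists>U\<in>\<U>. \<forall>z\<in>sq N j i. h z \<in> U"
proof -
  obtain \<delta> where d: "0 < \<delta>" "\<And>T. T \<subseteq> {0..1} \<times> {0..1} \<Longrightarrow> diameter T < \<delta> \<Longrightarrow> \<exists>U\<in>\<U>. \<forall>z\<in>T. h z \<in> U"
    using lebesgue_gen[OF compact_Times[OF compact_Icc compact_Icc] h opn cover ne] by blast
  obtain N :: nat where N: "2 / \<delta> < real N" using reals_Archimedean2 by blast
  have n0: "0 < N" using N d(1) by (smt (verit) divide_pos_pos of_nat_0_less_iff)
  have nd: "2 / real N < \<delta>"
  proof -
    show ?thesis using N d(1) n0 by (simp add: field_simps)
  qed
  have "\<exists>U\<in>\<U>. \<forall>z\<in>sq N j i. h z \<in> U" if ji: "j < N" "i < N" for j i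
  proof -
    have "diameter (sq N j i) \<le> 2 / real N"
    proof (rule diameter_le)
      show "sq N j i \<noteq> {} \<or> 0 \<le> 2 / real N" by simp
      fix x y assume xy: "x \<in> sq N j i" "y \<in> sq N j i"
      have a: "\<bar>fst x - fst y\<bar> \<le> 1 / real N"
      proof -
        have "\<bar>fst x - fst y\<bar> \<le> real (Suc j) / real N - real j / real N" using xy by (auto simp: sq_def)
        also have "\<dots> = 1 / real N" by (rule frac_diff)
        finally show ?thesis .
      qed
      have b: "\<bar>snd x - snd y\<bar> \<le> 1 / real N"
      proof -
        have "\<bar>snd x - snd y\<bar> \<le> real (Suc i) / real N - real i / real N" using xy by (auto simp: sq_def)
        also have "\<dots> = 1 / real N" by (rule frac_diff)
        finally show ?thesis .
      qed
      have "x - y = (fst x - fst y, snd x - snd y)" by (simp add: prod_eq_iff)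
      then have "norm (x - y) \<le> norm (fst x - fst y) + norm (snd x - snd y)"
        using norm_Pair_le by metis
      also have "\<dots> \<le> 2 / real N" using a b by simp
      finally show "norm (x - y) \<le> 2 / real N" .
    qed
    then show ?thesis using d(2)[OF sq_sub[OF ji]] nd by simp
  qed
  then show ?thesis using n0 by blast
qed



lemma seg_pathin:
  fixes a c :: "'b::real_normed_vector"
  assumes "convex S" "continuous_map (top_of_set S) W f" "a \<in> S" "c \<in> S"
  shows "pathin W (f \<circ> linepath a c)"
  by (rule pathin_comp_path[OF assms(2)]) (use assms in \<open>simp_all add: closed_segment_subset\<close>)

lemma smallp_subp: "smallp X UU q \<Longrightarrow> r \<in> {0..1} \<Longrightarrow> t \<in> {0..1} \<Longrightarrow> smallp X UU (subp q r t)"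
  unfolding smallp_def using pathin_subp by blast

lemma arith_sub:
  assumes "0 < n" "0 < m"
  shows "(1 - real j / real m) * (real i / real n) + real j / real m * (real (Suc i) / real n) = real (i * m + j) / real (n * m)"
  using assms by (simp add: field_simps)

lemma subp_piece:
  assumes n: "0 < n" and m: "0 < m"
  shows "subp (subp p (real i / real n) (real (Suc i) / real n)) (real j / real m) (real (Suc j) / real m) =
         subp p (real (i * m + j) / real (n * m)) (real (Suc (i * m + j)) / real (n * m))"
  unfolding subp_subp arith_sub[OF n m] by (simp only: add_Suc_right)


locale ext_setup = group G for G :: "('g, 'm) monoid_scheme" (structure) +
  fixes X :: "'a topology" and b :: 'a and UU :: "'a set set" and v :: "'a set \<Rightarrow> (real \<Rightarrow> 'a) \<Rightarrow> 'g"
  assumes opn: "\<And>U. U \<in> UU \<Longrightarrow> openin X U" and cover: "\<Union>UU = topspace X"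
    and bU: "\<And>U. U \<in> UU \<Longrightarrow> b \<in> U" and ne: "UU \<noteq> {}"
    and vc: "\<And>U. U \<in> UU \<Longrightarrow> v U \<in> cocycle1 (subtopology X U) b G"
    and agree: "\<And>U W p. U \<in> UU \<Longrightarrow> W \<in> UU \<Longrightarrow> pathin (subtopology X U) p \<Longrightarrow>
                   pathin (subtopology X W) p \<Longrightarrow> v U p = v W p"
begin

definition Vs where "Vs q = v (SOME U. U \<in> UU \<and> pathin (subtopology X U) q) q"

definition Vprod where
  "Vprod p n = gprod G (\<lambda>i. Vs (subp p (real i / real n) (real (Suc i) / real n))) n"

definition uext where
  "uext = restrict (\<lambda>p. Vprod p (SOME n. 0 < n \<and> finep X UU p n)) (Collect (pathin X))"

lemma Vs_eq:
  assumes U: "U \<in> UU" and q: "pathin (subtopology X U) q"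
  shows "Vs q = v U q"
proof -
  let ?W = "SOME U. U \<in> UU \<and> pathin (subtopology X U) q"
  have "?W \<in> UU \<and> pathin (subtopology X ?W) q"
    by (rule someI_ex) (use U q in blast)
  then show ?thesis unfolding Vs_def using agree[OF _ U _ q] by blast
qed

lemma Vs_carrier: "smallp X UU q \<Longrightarrow> Vs q \<in> carrier G"
  unfolding smallp_def using Vs_eq cocycle_carrier[OF vc] by metis

lemma Vs_eq01:
  assumes q: "smallp X UU q" and e: "\<And>x. x \<in> {0..1} \<Longrightarrow> q' x = q x"
  shows "smallp X UU q' \<and> Vs q' = Vs q"
proof -
  obtain U where U: "U \<in> UU" "pathin (subtopology X U) q" using q unfolding smallp_def by blast
  have "pathin (subtopology X U) q' \<and> v U q' = v U q"
    by (rule cocycle_eq01[OF vc[OF U(1)] U(2) e])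
  then show ?thesis using U Vs_eq unfolding smallp_def by metis
qed

lemma Vprod_carrier: "finep X UU p n \<Longrightarrow> Vprod p n \<in> carrier G"
  unfolding Vprod_def finep_def by (rule gprod_closed) (simp add: Vs_carrier)

lemma b_top: "b \<in> topspace X"
proof -
  obtain U where "U \<in> UU" using ne by blast
  then show ?thesis using bU openin_subset[OF opn] by blast
qed


lemma finep_mult:
  assumes f: "finep X UU p n" and n: "0 < n" and m: "0 < m"
  shows "finep X UU p (n * m) \<and> Vprod p (n * m) = Vprod p n"
proof -
  let ?pc = "\<lambda>i. subp p (real i / real n) (real (Suc i) / real n)"
  have pcs: "i < n \<Longrightarrow> smallp X UU (?pc i)" for i using f unfolding finep_def by blast
  have fin: "finep X UU p (n * m)"
    unfolding finep_def
  proof (intro allI impI)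
    fix k assume k: "k < n * m"
    have kd: "k = k div m * m + k mod m" by simp
    have i: "k div m < n" using k by (simp add: less_mult_imp_div_less)
    have j: "k mod m < m" using m by simp
    have "smallp X UU (subp (?pc (k div m)) (real (k mod m) / real m) (real (Suc (k mod m)) / real m))"
      by (rule smallp_subp[OF pcs[OF i]]) (use frac_01[OF j] in auto)
    then show "smallp X UU (subp p (real k / real (n * m)) (real (Suc k) / real (n * m)))"
      unfolding subp_piece[OF n m] using kd by simp
  qed
  have "Vprod p (n * m) = gprod G (\<lambda>i. gprod G (\<lambda>j. Vs (subp p (real (i * m + j) / real (n * m)) (real (Suc (i * m + j)) / real (n * m)))) m) n"
    unfolding Vprod_def
    by (rule gprod_mult) (use fin in \<open>simp add: finep_def Vs_carrier\<close>)
  also have "\<dots> = gprod G (\<lambda>i. Vs (?pc i)) n"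
  proof (rule gprod_cong)
    fix i assume i: "i < n"
    obtain U where U: "U \<in> UU" "pathin (subtopology X U) (?pc i)" using pcs[OF i] unfolding smallp_def by blast
    have "gprod G (\<lambda>j. Vs (subp p (real (i * m + j) / real (n * m)) (real (Suc (i * m + j)) / real (n * m)))) m
        = gprod G (\<lambda>j. v U (subp (?pc i) (real j / real m) (real (Suc j) / real m))) m"
    proof (rule gprod_cong)
      fix j assume j: "j < m"
      have "pathin (subtopology X U) (subp (?pc i) (real j / real m) (real (Suc j) / real m))"
        by (rule pathin_subp[OF U(2)]) (use frac_01[OF j] in auto)
      then show "Vs (subp p (real (i * m + j) / real (n * m)) (real (Suc (i * m + j)) / real (n * m))) =
          v U (subp (?pc i) (real j / real m) (real (Suc j) / real m))"
        using Vs_eq[OF U(1)] unfolding subp_piece[OF n m] by simp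
    qed
    also have "\<dots> = v U (?pc i)"
      by (rule cocycle_subdiv[OF vc[OF U(1)] U(2) m, symmetric])
    also have "\<dots> = Vs (?pc i)" using Vs_eq[OF U] by simp
    finally show "gprod G (\<lambda>j. Vs (subp p (real (i * m + j) / real (n * m)) (real (Suc (i * m + j)) / real (n * m)))) m = Vs (?pc i)" .
  qed
  also have "\<dots> = Vprod p n" unfolding Vprod_def ..
  finally show ?thesis using fin by simp
qed

lemma Vprod_welldef:
  assumes "finep X UU p n" "finep X UU p m" "0 < n" "0 < m"
  shows "Vprod p n = Vprod p m"
  using finep_mult[OF assms(1,3,4)] finep_mult[OF assms(2,4,3)] by (simp add: mult.commute)

lemma uext_eq:
  assumes p: "pathin X p" and f: "finep X UU p n" and n: "0 < n"
  shows "uext p = Vprod p n"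
proof -
  let ?n = "SOME n. 0 < n \<and> finep X UU p n"
  have "0 < ?n \<and> finep X UU p ?n" by (rule someI_ex) (use f n in blast)
  then have "Vprod p ?n = Vprod p n" using Vprod_welldef f n by blast
  then show ?thesis unfolding uext_def using p by simp
qed

lemma uext_small:
  assumes U: "U \<in> UU" and p: "pathin (subtopology X U) p"
  shows "uext p = v U p"
proof -
  have p': "pathin X p" using p pathin_subtopology by blast
  have f: "finep X UU p 1" using U p by (auto simp: finep_def smallp_def)
  have "uext p = Vprod p 1" by (rule uext_eq[OF p' f]) simp
  also have "\<dots> = Vs p"
  proof -
    have "Vs p \<in> carrier G" using Vs_carrier U p unfolding smallp_def by blast
    then show ?thesis by (simp add: Vprod_def)
  qed
  also have "\<dots> = v U p" by (rule Vs_eq[OF U p])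
  finally show ?thesis .
qed

lemma uext_restrict:
  assumes U: "U \<in> UU"
  shows "restrict uext (Collect (pathin (subtopology X U))) = v U"
proof
  fix p show "restrict uext (Collect (pathin (subtopology X U))) p = v U p"
    using uext_small[OF U, of p] cocycle_ext[OF vc[OF U], of p] by auto
qed


lemma cat_left:
  assumes i: "i < n" and x: "x \<in> {0..1}"
  shows "subp (path_cat p q) (real i / real (n + n)) (real (Suc i) / real (n + n)) x =
         subp p (real i / real n) (real (Suc i) / real n) x"
proof -
  let ?y = "(1 - x) * (real i / real (n + n)) + x * (real (Suc i) / real (n + n))"
  have n: "0 < n" using i by simp
  have "?y \<le> real (Suc i) / real (n + n)"
    using between01[of x "real i / real (n + n)" "real (Suc i) / real (n + n)"] x frac_le[of "n + n" i] n by auto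
  also have "\<dots> \<le> 1 / 2" using i by (simp add: field_simps)
  finally have y: "?y \<le> 1 / 2" .
  have "2 * ?y = (1 - x) * (real i / real n) + x * (real (Suc i) / real n)"
    using n by (simp add: field_simps)
  then show ?thesis using y by (simp add: subp_apply path_cat_def)
qed

lemma cat_right:
  assumes i: "i < n" and x: "x \<in> {0..1}" and e: "p 1 = q 0"
  shows "subp (path_cat p q) (real (n + i) / real (n + n)) (real (Suc (n + i)) / real (n + n)) x =
         subp q (real i / real n) (real (Suc i) / real n) x"
proof -
  let ?y = "(1 - x) * (real (n + i) / real (n + n)) + x * (real (Suc (n + i)) / real (n + n))"
  have n: "0 < n" using i by simp
  have "1 / 2 \<le> real (n + i) / real (n + n)" using n by (simp add: field_simps)
  also have "\<dots> \<le> ?y"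
    using between01[of x "real (n + i) / real (n + n)" "real (Suc (n + i)) / real (n + n)"] x frac_le[of "n + n" "n + i"] n by auto
  finally have y: "1 / 2 \<le> ?y" .
  have e2: "2 * ?y - 1 = (1 - x) * (real i / real n) + x * (real (Suc i) / real n)"
    using n by (simp add: field_simps)
  show ?thesis
  proof (cases "?y \<le> 1 / 2")
    case True
    then have "2 * ?y = 1" using y by simp
    moreover have "2 * ?y - 1 = 0" using True y by simp
    ultimately show ?thesis using True e e2 by (simp add: subp_apply path_cat_def)
  next
    case False
    then show ?thesis using e2 by (simp add: subp_apply path_cat_def)
  qed
qed

lemma uext_cat:
  assumes p: "pathin X p" and q: "pathin X q" and e: "p 1 = q 0"
  shows "uext (path_cat p q) = uext p \<otimes> uext q"
proof -
  obtain N1 where N1: "\<And>n. N1 \<le> n \<Longrightarrow> 0 < n \<and> finep X UU p n"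
    using lebesgue_path[OF p opn cover ne] by blast
  obtain N2 where N2: "\<And>n. N2 \<le> n \<Longrightarrow> 0 < n \<and> finep X UU q n"
    using lebesgue_path[OF q opn cover ne] by blast
  define n where "n = max N1 N2"
  have n: "0 < n" and fp: "finep X UU p n" and fq: "finep X UU q n"
    using N1[of n] N2[of n] by (auto simp: n_def)
  let ?pc = "path_cat p q"
  have pc: "pathin X ?pc" by (rule pathin_cat[OF p q e])
  let ?P = "\<lambda>i. subp p (real i / real n) (real (Suc i) / real n)"
  let ?Q = "\<lambda>i. subp q (real i / real n) (real (Suc i) / real n)"
  let ?C = "\<lambda>k. subp ?pc (real k / real (n + n)) (real (Suc k) / real (n + n))"
  have L: "smallp X UU (?C i) \<and> Vs (?C i) = Vs (?P i)" if i: "i < n" for i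
  proof (rule Vs_eq01)
    show "smallp X UU (?P i)" using fp i unfolding finep_def by blast
    show "?C i x = ?P i x" if "x \<in> {0..1}" for x by (rule cat_left[OF i that])
  qed
  have R: "smallp X UU (?C (n + i)) \<and> Vs (?C (n + i)) = Vs (?Q i)" if i: "i < n" for i
  proof (rule Vs_eq01)
    show "smallp X UU (?Q i)" using fq i unfolding finep_def by blast
    show "?C (n + i) x = ?Q i x" if "x \<in> {0..1}" for x by (rule cat_right[of i n x p q, OF i that e])
  qed
  have fc: "finep X UU ?pc (n + n)"
    unfolding finep_def
  proof (intro allI impI)
    fix k assume k: "k < n + n"
    show "smallp X UU (?C k)"
    proof (cases "k < n")
      case True then show ?thesis using L by blast
    next
      case False
      then obtain i where "k = n + i" "i < n" using k by (metis add_less_cancel_left le_Suc_ex not_less)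
      then show ?thesis using R by blast
    qed
  qed
  have "uext ?pc = Vprod ?pc (n + n)" by (rule uext_eq[OF pc fc]) (use n in simp)
  also have "\<dots> = gprod G (\<lambda>k. Vs (?C k)) n \<otimes> gprod G (\<lambda>i. Vs (?C (n + i))) n"
    unfolding Vprod_def by (rule gprod_add) (use fc in \<open>simp add: finep_def Vs_carrier\<close>)
  also have "gprod G (\<lambda>k. Vs (?C k)) n = Vprod p n"
    unfolding Vprod_def by (rule gprod_cong) (use L in blast)
  also have "gprod G (\<lambda>i. Vs (?C (n + i))) n = Vprod q n"
    unfolding Vprod_def by (rule gprod_cong) (use R in blast)
  also have "Vprod p n = uext p" by (rule uext_eq[OF p fp n, symmetric])
  also have "Vprod q n = uext q" by (rule uext_eq[OF q fq n, symmetric])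
  finally show ?thesis .
qed


lemma square_rel:
  fixes a b' c d :: "'b::real_normed_vector"
  assumes S: "convex S" and f: "continuous_map (top_of_set S) (subtopology X U) f" and U: "U \<in> UU"
    and pts: "a \<in> S" "b' \<in> S" "c \<in> S" "d \<in> S"
  shows "Vs (f \<circ> linepath a b') \<otimes> Vs (f \<circ> linepath b' d) = Vs (f \<circ> linepath a c) \<otimes> Vs (f \<circ> linepath c d)"
proof -
  have pa: "pathin (subtopology X U) (f \<circ> linepath x y)" if "x \<in> S" "y \<in> S" for x y
    by (rule seg_pathin[OF S f that])
  have im: "path_image (linepath x y) \<subseteq> S" if "x \<in> S" "y \<in> S" for x y
    using S that by (simp add: closed_segment_subset)
  have j1: "pathin (subtopology X U) (f \<circ> (linepath a b' +++ linepath b' d))"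
    by (rule pathin_comp_path[OF f]) (use im pts in \<open>auto simp: path_image_join\<close>)
  have j2: "pathin (subtopology X U) (f \<circ> (linepath a c +++ linepath c d))"
    by (rule pathin_comp_path[OF f]) (use im pts in \<open>auto simp: path_image_join\<close>)
  have h: "path_homotopic (subtopology X U) (f \<circ> (linepath a b' +++ linepath b' d)) (f \<circ> (linepath a c +++ linepath c d))"
  proof (rule CL[OF S f])
    show "path_image (linepath a b' +++ linepath b' d) \<subseteq> S" "path_image (linepath a c +++ linepath c d) \<subseteq> S"
      using im pts by (auto simp: path_image_join)
    show "(linepath a b' +++ linepath b' d) 0 = (linepath a c +++ linepath c d) 0"
      "(linepath a b' +++ linepath b' d) 1 = (linepath a c +++ linepath c d) 1"
      by (simp_all add: joinpaths_def linepath_def)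
  qed simp_all
  have "v U (f \<circ> linepath a b') \<otimes> v U (f \<circ> linepath b' d) = v U (path_cat (f \<circ> linepath a b') (f \<circ> linepath b' d))"
    by (rule cocycle_cat[OF vc[OF U], symmetric]) (use pa pts in \<open>auto simp: linepath_def\<close>)
  also have "\<dots> = v U (f \<circ> (linepath a b' +++ linepath b' d))" by (simp add: path_cat_comp)
  also have "\<dots> = v U (f \<circ> (linepath a c +++ linepath c d))" by (rule cocycle_htp[OF vc[OF U] j1 j2 h])
  also have "\<dots> = v U (path_cat (f \<circ> linepath a c) (f \<circ> linepath c d))" by (simp add: path_cat_comp)
  also have "\<dots> = v U (f \<circ> linepath a c) \<otimes> v U (f \<circ> linepath c d)"
    by (rule cocycle_cat[OF vc[OF U]]) (use pa pts in \<open>auto simp: linepath_def\<close>)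
  finally show ?thesis using Vs_eq[OF U] pa pts by simp
qed


lemma uext_htp:
  assumes p: "pathin X p" and q: "pathin X q" and pq: "path_homotopic X p q"
  shows "uext p = uext q"
proof -
  obtain h where hc0: "continuous_map (prod_topology (top_of_set {0..1::real}) (top_of_set {0..1::real})) X h"
    and h0': "\<forall>x. h (0, x) = p x" and h1': "\<forall>x. h (1, x) = q x"
    and hP': "\<forall>t\<in>{0..1}. h (t, 0) = p 0 \<and> h (t, 1) = p 1"
    using pq unfolding path_homotopic_def homotopic_with_def by blast
  have h0: "\<And>x. h (0, x) = p x" and h1: "\<And>x. h (1, x) = q x"
    and hP: "\<And>t. t \<in> {0..1} \<Longrightarrow> h (t, 0) = p 0 \<and> h (t, 1) = p 1"
    using h0' h1' hP' by blast+
  have hc: "continuous_map (top_of_set ({0..1} \<times> {0..1})) X h" using hc0 by simp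
  obtain N where N: "0 < N" and NU: "\<And>j i. j < N \<Longrightarrow> i < N \<Longrightarrow> \<exists>U\<in>UU. \<forall>z\<in>sq N j i. h z \<in> U"
    using lebesgue_square[OF hc opn cover ne] by blast
  define P where "P j i = (real j / real N, real i / real N)" for j i
  have hsq: "continuous_map (top_of_set (sq N j i)) (subtopology X U) h"
    if ji: "j < N" "i < N" and U: "\<forall>z\<in>sq N j i. h z \<in> U" for j i U
  proof -
    have "continuous_map (top_of_set (sq N j i)) X h"
      by (rule continuous_map_from_subtopology_mono[OF hc sq_sub[OF ji]])
    then show ?thesis using U by (auto simp: continuous_map_in_subtopology)
  qed
  have corners: "P j i \<in> sq N j i" "P j (Suc i) \<in> sq N j i" "P (Suc j) i \<in> sq N j i" "P (Suc j) (Suc i) \<in> sq N j i" for j i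
    unfolding sq_def P_def mem_Times_iff fst_conv snd_conv atLeastAtMost_iff using frac_le[OF N] by auto
  define row where "row j = (\<lambda>x. h (real j / real N, x))" for j
  have row_piece: "subp (row j) (real i / real N) (real (Suc i) / real N) = h \<circ> linepath (P j i) (P j (Suc i))" for j i
  proof -
    have aa: "\<And>a x::real. (1 - x) * a + x * a = a" by (simp add: algebra_simps)
    show ?thesis by (rule ext) (use N in \<open>simp add: subp_apply linepath_def P_def row_def field_simps\<close>)
  qed
  have row_small: "smallp X UU (h \<circ> linepath (P j i) (P j (Suc i)))" if j: "j \<le> N" and i: "i < N" for j i
  proof -
    obtain j' where j': "j' < N" "P j i \<in> sq N j' i" "P j (Suc i) \<in> sq N j' i"
    proof (cases "j < N")
      case True then show ?thesis using that corners by blast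
    next
      case False
      then have jN: "j = Suc (N - 1)" using j N by simp
      show ?thesis by (rule that[of "N - 1"]) (use N corners[of "N - 1"] jN in auto)
    qed
    obtain U where U: "U \<in> UU" "\<forall>z\<in>sq N j' i. h z \<in> U" using NU[OF j'(1) i] by blast
    have "pathin (subtopology X U) (h \<circ> linepath (P j i) (P j (Suc i)))"
      by (rule seg_pathin[OF convex_sq hsq[OF j'(1) i U(2)] j'(2,3)])
    then show ?thesis using U(1) unfolding smallp_def by blast
  qed
  have row_pathin: "pathin X (row j)" if j: "j \<le> N" for j
  proof -
    have jj: "real j / real N \<in> {0..1}" using j N by (auto simp: field_simps)
    have "pathin X (h \<circ> (\<lambda>x. (real j / real N, x)))"
      by (rule pathin_comp_path[OF hc]) (use jj in \<open>auto simp: path_def path_image_def intro!: continuous_intros\<close>)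
    then show ?thesis by (simp add: row_def o_def)
  qed
  have row_fine: "finep X UU (row j) N" if "j \<le> N" for j
    unfolding finep_def row_piece using row_small that by blast
  let ?B = "\<lambda>j i. Vs (h \<circ> linepath (P j i) (P j (Suc i)))"
  have row_val: "uext (row j) = gprod G (?B j) N" if "j \<le> N" for j
    using uext_eq[OF row_pathin[OF that] row_fine[OF that] N] unfolding Vprod_def row_piece .
  have step: "gprod G (?B j) N = gprod G (?B (Suc j)) N" if j: "j < N" for j
  proof -
    let ?A = "\<lambda>i. Vs (h \<circ> linepath (P j i) (P (Suc j) i))"
    have A0: "?A 0 = \<one>" and AN: "?A N = \<one>"
    proof -
      have r01: "(1 - x) * (real j / real N) + x * (real (Suc j) / real N) \<in> {0..1}" if x: "x \<in> {0..1}" for x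
        using between01[of x "real j / real N" "real (Suc j) / real N"] x frac_le[OF N, of j] frac_01[OF j] by auto
      obtain U where U: "U \<in> UU" "\<forall>z\<in>sq N j 0. h z \<in> U" using NU[OF j N] by blast
      have pa: "pathin (subtopology X U) (h \<circ> linepath (P j 0) (P (Suc j) 0))"
        by (rule seg_pathin[OF convex_sq hsq[OF j N U(2)]]) (use corners in auto)
      have eq: "(\<lambda>x. p 0) x = (h \<circ> linepath (P j 0) (P (Suc j) 0)) x" if "x \<in> {0..1}" for x
        using hP[OF r01[OF that]] by (simp add: linepath_def P_def)
      have hj0: "h (real j / real N, 0) = p 0" using hP[of "real j / real N"] frac_01[OF j] by auto
      have "p 0 \<in> topspace (subtopology X U)"
        using path_start_in_topspace[OF pa] hj0 by (simp add: linepath_def P_def)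
      then have c: "pathin (subtopology X U) (\<lambda>x. p 0)" by simp
      have "?A 0 = v U (h \<circ> linepath (P j 0) (P (Suc j) 0))" by (rule Vs_eq[OF U(1) pa])
      also have "\<dots> = v U (\<lambda>x. p 0)" using cocycle_eq01[OF vc[OF U(1)] pa eq] by (simp add: o_def)
      also have "\<dots> = \<one>" using cocycle_const[OF vc[OF U(1)]] c by simp
      finally show "?A 0 = \<one>" .
      have N1: "N - 1 < N" using N by simp
      obtain U' where U': "U' \<in> UU" "\<forall>z\<in>sq N j (N - 1). h z \<in> U'" using NU[OF j N1] by blast
      have cN: "P j N \<in> sq N j (N - 1)" "P (Suc j) N \<in> sq N j (N - 1)"
        using corners[of j "N - 1"] N by (simp_all add: Suc_diff_1)
      have pa': "pathin (subtopology X U') (h \<circ> linepath (P j N) (P (Suc j) N))"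
        by (rule seg_pathin[OF convex_sq hsq[OF j N1 U'(2)] cN])
      have eq': "(\<lambda>x. p 1) x = (h \<circ> linepath (P j N) (P (Suc j) N)) x" if "x \<in> {0..1}" for x
        using hP[OF r01[OF that]] N by (simp add: linepath_def P_def algebra_simps)
      have hj1: "h (real j / real N, 1) = p 1" using hP[of "real j / real N"] frac_01[OF j] by auto
      have "p 1 \<in> topspace (subtopology X U')"
        using path_start_in_topspace[OF pa'] hj1 N by (simp add: linepath_def P_def)
      then have c': "pathin (subtopology X U') (\<lambda>x. p 1)" by simp
      have "?A N = v U' (h \<circ> linepath (P j N) (P (Suc j) N))" by (rule Vs_eq[OF U'(1) pa'])
      also have "\<dots> = v U' (\<lambda>x. p 1)" using cocycle_eq01[OF vc[OF U'(1)] pa' eq'] by (simp add: o_def)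
      also have "\<dots> = \<one>" using cocycle_const[OF vc[OF U'(1)]] c' by simp
      finally show "?A N = \<one>" .
    qed
    have sq_facts: "smallp X UU (h \<circ> linepath (P j i) (P j (Suc i))) \<and>
                    smallp X UU (h \<circ> linepath (P (Suc j) i) (P (Suc j) (Suc i))) \<and>
                    smallp X UU (h \<circ> linepath (P j i) (P (Suc j) i)) \<and>
                    ?B j i \<otimes> ?A (Suc i) = ?A i \<otimes> ?B (Suc j) i" if i: "i < N" for i
    proof -
      obtain U where U: "U \<in> UU" "\<forall>z\<in>sq N j i. h z \<in> U" using NU[OF j i] by blast
      have f: "continuous_map (top_of_set (sq N j i)) (subtopology X U) h" by (rule hsq[OF j i U(2)])
      have "pathin (subtopology X U) (h \<circ> linepath (P j i) (P j (Suc i)))"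
           "pathin (subtopology X U) (h \<circ> linepath (P (Suc j) i) (P (Suc j) (Suc i)))"
           "pathin (subtopology X U) (h \<circ> linepath (P j i) (P (Suc j) i))"
        by (rule seg_pathin[OF convex_sq f]; use corners in simp)+
      then show ?thesis
        using square_rel[OF convex_sq f U(1) corners(1) corners(2) corners(3) corners(4)] U(1)
        unfolding smallp_def by blast
    qed
    have "gprod G (?B j) N \<otimes> ?A N = ?A 0 \<otimes> gprod G (?B (Suc j)) N"
    proof (rule gprod_tele)
      show "\<And>i. i < N \<Longrightarrow> ?B j i \<in> carrier G" using sq_facts Vs_carrier by blast
      show "\<And>i. i < N \<Longrightarrow> ?B (Suc j) i \<in> carrier G" using sq_facts Vs_carrier by blast
      show "\<And>i. i < N \<Longrightarrow> ?B j i \<otimes> ?A (Suc i) = ?A i \<otimes> ?B (Suc j) i" using sq_facts by blast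
      show "?A i \<in> carrier G" if "i \<le> N" for i
      proof (cases "i < N")
        case True then show ?thesis using sq_facts Vs_carrier by blast
      next
        case False then have "i = N" using that by simp
        then show ?thesis using AN by simp
      qed
    qed
    moreover have "gprod G (?B j) N \<in> carrier G" "gprod G (?B (Suc j)) N \<in> carrier G"
      using sq_facts Vs_carrier by (auto intro!: gprod_closed)
    ultimately show ?thesis using A0 AN by simp
  qed
  have "j \<le> N \<Longrightarrow> uext (row j) = uext (row 0)" for j
  proof (induction j)
    case 0 then show ?case by simp
  next
    case (Suc j)
    then show ?case using row_val step by simp
  qed
  from this[of N] have "uext (row N) = uext (row 0)" by simp
  moreover have "row 0 = p" by (rule ext) (simp add: row_def h0)
  moreover have "row N = q" by (rule ext) (use N in \<open>simp add: row_def h1\<close>)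
  ultimately show ?thesis by simp
qed


lemma uext_cocycle: "uext \<in> cocycle1 X b G"
  unfolding cocycle1_def
proof (intro CollectI conjI allI impI)
  show "uext \<in> Collect (pathin X) \<rightarrow>\<^sub>E carrier G"
    unfolding uext_def restrict_PiE_iff
  proof
    fix p assume "p \<in> Collect (pathin X)"
    then have p: "pathin X p" by simp
    obtain N where "\<And>n. N \<le> n \<Longrightarrow> 0 < n \<and> finep X UU p n"
      using lebesgue_path[OF p opn cover ne] by blast
    then have f: "0 < N \<and> finep X UU p N" by blast
    have "uext p = Vprod p N" using uext_eq[OF p] f by blast
    then show "Vprod p (SOME n. 0 < n \<and> finep X UU p n) \<in> carrier G"
      using Vprod_carrier f p by (simp add: uext_def)
  qed
  obtain U where U: "U \<in> UU" using ne by blast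
  have bt: "b \<in> topspace (subtopology X U)" using b_top bU[OF U] by simp
  have "uext (\<lambda>t. b) = v U (\<lambda>t. b)" by (rule uext_small[OF U]) (use bt in simp)
  also have "\<dots> = \<one>" by (rule cocycle_const[OF vc[OF U] bt])
  finally show "uext (\<lambda>t. b) = \<one>" .
next
  fix p q
  show "pathin X p \<and> pathin X q \<and> path_homotopic X p q \<Longrightarrow> uext p = uext q"
    using uext_htp by blast
  show "pathin X p \<and> pathin X q \<and> p 1 = q 0 \<Longrightarrow> uext (path_cat p q) = uext p \<otimes> uext q"
    using uext_cat by blast
qed

lemma ext_exists: "\<exists>u\<in>cocycle1 X b G. \<forall>U\<in>UU. restrict u (Collect (pathin (subtopology X U))) = v U"
  using uext_cocycle uext_restrict by blast

end




context group
begin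

lemma solve_c: "a \<in> carrier G \<Longrightarrow> b \<in> carrier G \<Longrightarrow> c \<in> carrier G \<Longrightarrow> a = b \<otimes> inv c \<Longrightarrow> c = inv a \<otimes> b"
  by (simp add: inv_mult_group m_assoc)

lemma alg1:
  assumes "g0 \<in> carrier G" "c0 \<in> carrier G" "q \<in> carrier G" "c1 \<in> carrier G" "g1 \<in> carrier G"
  shows "(g0 \<otimes> inv c0) \<otimes> (c0 \<otimes> q \<otimes> inv c1) \<otimes> inv (g1 \<otimes> inv c1) = g0 \<otimes> q \<otimes> inv g1"
  using assms by (simp add: m_assoc inv_mult_group inv_cancel_left)

lemma alg2:
  assumes "a \<in> carrier G" "b \<in> carrier G" "q \<in> carrier G" "c \<in> carrier G" "d \<in> carrier G"
  shows "(inv a \<otimes> b) \<otimes> q \<otimes> inv (inv c \<otimes> d) = inv a \<otimes> (b \<otimes> q \<otimes> inv d) \<otimes> c"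
  using assms by (simp add: m_assoc inv_mult_group)

end


locale thm_setup = group G for G :: "('g, 'm) monoid_scheme" (structure) +
  fixes X :: "'a topology" and b :: 'a and UU :: "'a set set"
    and hU :: "'a set \<Rightarrow> ((real \<Rightarrow> 'a) \<Rightarrow> 'g) set"
  assumes b: "b \<in> topspace X"
    and opn: "\<And>U. U \<in> UU \<Longrightarrow> openin X U"
    and cover: "\<Union>UU = topspace X"
    and bU: "\<And>U. U \<in> UU \<Longrightarrow> b \<in> U"
    and pc1: "\<And>U. U \<in> UU \<Longrightarrow> path_connectedin X U"
    and pc2: "\<And>U V. U \<in> UU \<Longrightarrow> V \<in> UU \<Longrightarrow> path_connectedin X (U \<inter> V)"
    and pc3: "\<And>U V W. U \<in> UU \<Longrightarrow> V \<in> UU \<Longrightarrow> W \<in> UU \<Longrightarrow> path_connectedin X (U \<inter> V \<inter> W)"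
    and hUin: "\<And>U. U \<in> UU \<Longrightarrow> hU U \<in> H1 (subtopology X U) b G"
begin

lemma ne: "UU \<noteq> {}" using b cover by auto

lemma bt: "U \<in> UU \<Longrightarrow> b \<in> topspace (subtopology X U)"
  using b bU by simp

lemma topU: "U \<in> UU \<Longrightarrow> topspace (subtopology X U) = U"
  using openin_subset[OF opn] by (auto simp: Int_absorb1)

lemma get_path:
  assumes "path_connectedin X S" "x \<in> S" "y \<in> S"
  obtains g where "pathin (subtopology X S) g" "g 0 = x" "g 1 = y"
proof -
  obtain g where "pathin X g" "g \<in> {0..1} \<rightarrow> S" "g 0 = x" "g 1 = y"
    using assms unfolding path_connectedin by blast
  then show ?thesis using that by (auto simp: pathin_subtopology)
qed

lemma pathin_mono: "pathin (subtopology X S) g \<Longrightarrow> S \<subseteq> T \<Longrightarrow> pathin (subtopology X T) g"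
  by (auto simp: pathin_subtopology)

lemma necessity:
  assumes h: "h \<in> H1 X b G" and r: "\<forall>U\<in>UU. res1 X b G U h = hU U"
  shows "\<forall>U\<in>UU. \<forall>V\<in>UU. res1 (subtopology X U) b G (U \<inter> V) (hU U) = res1 (subtopology X V) b G (U \<inter> V) (hU V)"
proof (intro ballI)
  fix U V assume U: "U \<in> UU" and V: "V \<in> UU"
  have bUV: "b \<in> U \<inter> V" using bU U V by blast
  have "res1 (subtopology X U) b G (U \<inter> V) (hU U) = res1 X b G (U \<inter> V) h"
    using r U res1_res1[OF b bUV _ h, of U] by auto
  moreover have "res1 (subtopology X V) b G (U \<inter> V) (hU V) = res1 X b G (U \<inter> V) h"
    using r V res1_res1[OF b bUV _ h, of V] by auto
  ultimately show "res1 (subtopology X U) b G (U \<inter> V) (hU U) = res1 (subtopology X V) b G (U \<inter> V) (hU V)"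
    by simp
qed


lemma uniqueness:
  assumes h: "h \<in> H1 X b G" and h': "h' \<in> H1 X b G"
    and r: "\<forall>U\<in>UU. res1 X b G U h = hU U" and r': "\<forall>U\<in>UU. res1 X b G U h' = hU U"
  shows "h = h'"
proof -
  let ?u = "SOME u. u \<in> h" and ?u' = "SOME u. u \<in> h'"
  have uh: "?u \<in> h" by (rule H1_some[OF b h])
  have uh': "?u' \<in> h'" by (rule H1_some[OF b h'])
  have u: "?u \<in> cocycle1 X b G" "orbit1 X b G ?u = h" using H1_elem[OF b h uh] by auto
  have u': "?u' \<in> cocycle1 X b G" "orbit1 X b G ?u' = h'" using H1_elem[OF b h' uh'] by auto
  define P where "P U = Collect (pathin (subtopology X U))" for U
  have exc: "\<exists>c. c \<in> cochain0 (subtopology X U) b G \<and>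
       restrict ?u' (P U) = cochain_act (subtopology X U) G c (restrict ?u (P U))" if U: "U \<in> UU" for U
  proof -
    have "orbit1 (subtopology X U) b G (restrict ?u' (P U)) = orbit1 (subtopology X U) b G (restrict ?u (P U))"
      using res1_rep[OF b bU[OF U] h uh] res1_rep[OF b bU[OF U] h' uh'] r r' U by (simp add: P_def)
    then have "restrict ?u' (P U) \<in> orbit1 (subtopology X U) b G (restrict ?u (P U))"
      using orbit_eq_iff[OF bt[OF U] restr_cocycle[OF u'(1) bU[OF U] b] restr_cocycle[OF u(1) bU[OF U] b]]
      by (simp add: P_def)
    then show ?thesis by (auto simp: orbit1_def)
  qed
  define cc where "cc U = (SOME c. c \<in> cochain0 (subtopology X U) b G \<and>
       restrict ?u' (P U) = cochain_act (subtopology X U) G c (restrict ?u (P U)))" for U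
  have cc: "cc U \<in> cochain0 (subtopology X U) b G"
      "\<And>p. pathin (subtopology X U) p \<Longrightarrow> ?u' p = cc U (p 0) \<otimes> ?u p \<otimes> inv (cc U (p 1))"
    if U: "U \<in> UU" for U
  proof -
    have "cc U \<in> cochain0 (subtopology X U) b G \<and>
       restrict ?u' (P U) = cochain_act (subtopology X U) G (cc U) (restrict ?u (P U))"
      unfolding cc_def by (rule someI_ex[OF exc[OF U]])
    then show "cc U \<in> cochain0 (subtopology X U) b G"
      "\<And>p. pathin (subtopology X U) p \<Longrightarrow> ?u' p = cc U (p 0) \<otimes> ?u p \<otimes> inv (cc U (p 1))"
      by (auto simp: P_def fun_eq_iff act_apply split: if_splits dest: spec)
  qed
  have cc_val: "cc U x = inv (?u' g) \<otimes> ?u g"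
    if U: "U \<in> UU" and g: "pathin (subtopology X U) g" "g 0 = b" "g 1 = x" for U g x
  proof -
    have x: "x \<in> topspace (subtopology X U)" using path_finish_in_topspace[OF g(1)] g(3) by simp
    have ug: "?u g \<in> carrier G" using cocycle_carrier[OF u(1)] g(1) pathin_subtopology by blast
    have e: "?u' g = ?u g \<otimes> inv (cc U x)"
      using cc(2)[OF U g(1)] g cochain0_b[OF cc(1)[OF U]] ug by simp
    have u'g: "?u' g \<in> carrier G" using cocycle_carrier[OF u'(1)] g(1) pathin_subtopology by blast
    show ?thesis
      by (rule solve_c[OF u'g ug cochain0_carrier[OF cc(1)[OF U] x] e])
  qed
  have cc_agree: "cc U x = cc W x" if U: "U \<in> UU" and W: "W \<in> UU" and x: "x \<in> U \<inter> W" for U W x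
  proof -
    obtain g where g: "pathin (subtopology X (U \<inter> W)) g" "g 0 = b" "g 1 = x"
      using get_path[OF pc2[OF U W], of b x] bU U W x by blast
    show ?thesis using cc_val[OF U pathin_mono[OF g(1)] g(2,3)] cc_val[OF W pathin_mono[OF g(1)] g(2,3)] by auto
  qed
  define UX where "UX x = (SOME U. U \<in> UU \<and> x \<in> U)" for x
  have UX: "UX x \<in> UU \<and> x \<in> UX x" if "x \<in> topspace X" for x
    unfolding UX_def by (rule someI_ex) (use that cover in auto)
  define c where "c = (\<lambda>x\<in>topspace X. cc (UX x) x)"
  have c_val: "c x = cc U x" if U: "U \<in> UU" and x: "x \<in> U" for U x
  proof -
    have xt: "x \<in> topspace X" using x openin_subset[OF opn[OF U]] by blast
    show ?thesis using cc_agree[OF _ U, of "UX x" x] UX[OF xt] x xt by (simp add: c_def)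
  qed
  have c: "c \<in> cochain0 X b G"
    unfolding cochain0_def
  proof (intro CollectI conjI)
    show "c \<in> topspace X \<rightarrow>\<^sub>E carrier G"
      unfolding c_def restrict_PiE_iff
    proof
      fix x assume x: "x \<in> topspace X"
      then show "cc (UX x) x \<in> carrier G"
        using UX[OF x] cochain0_carrier[OF cc(1)] topU by metis
    qed
    obtain U where U: "U \<in> UU" using ne by blast
    show "c b = \<one>" using c_val[OF U bU[OF U]] cochain0_b[OF cc(1)[OF U]] by simp
  qed
  have "?u' = cochain_act X G c ?u"
  proof (rule ext)
    fix p show "?u' p = cochain_act X G c ?u p"
    proof (cases "pathin X p")
      case False
      then show ?thesis using cocycle_ext[OF u'(1) False] by (simp add: act_apply_ext)
    next
      case p: True
      obtain N where "\<And>n. N \<le> n \<Longrightarrow> 0 < n \<and> finep X UU p n"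
        using lebesgue_path[OF p opn cover ne] by blast
      then have n: "0 < N" and f: "finep X UU p N" by auto
      let ?pc = "\<lambda>i. subp p (real i / real N) (real (Suc i) / real N)"
      let ?a = "\<lambda>i. c (p (real i / real N))"
      have pcs: "\<exists>U\<in>UU. pathin (subtopology X U) (?pc i)" if "i < N" for i
        using f that unfolding finep_def smallp_def by blast
      have pt: "p (real i / real N) \<in> topspace X" if "i \<le> N" for i
        using path_image_subset_topspace[OF p] that n by (auto simp: Pi_iff field_simps)
      have rel: "?u' (?pc i) = ?a i \<otimes> ?u (?pc i) \<otimes> inv (?a (Suc i))" if i: "i < N" for i
      proof -
        obtain U where U: "U \<in> UU" "pathin (subtopology X U) (?pc i)" using pcs[OF i] by blast
        have e0: "?pc i 0 = p (real i / real N)" and e1: "?pc i 1 = p (real (Suc i) / real N)"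
          by (simp_all add: subp_apply)
        have "?pc i 0 \<in> U" "?pc i 1 \<in> U"
          using U(2) unfolding pathin_subtopology by auto
        then show ?thesis using cc(2)[OF U] c_val[OF U(1)] e0 e1 by simp
      qed
      have pcX: "pathin X (?pc i)" if "i < N" for i using pcs[OF that] pathin_subtopology by blast
      have "gprod G (\<lambda>i. ?u' (?pc i)) N \<otimes> ?a N = ?a 0 \<otimes> gprod G (\<lambda>i. ?u (?pc i)) N"
      proof (rule gprod_tele[where b = "\<lambda>i. ?u' (?pc i)" and a = ?a and t = "\<lambda>i. ?u (?pc i)"])
        show "\<And>i. i < N \<Longrightarrow> ?u' (?pc i) \<in> carrier G" using cocycle_carrier[OF u'(1)] pcX by blast
        show "\<And>i. i < N \<Longrightarrow> ?u (?pc i) \<in> carrier G" using cocycle_carrier[OF u(1)] pcX by blast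
        show "\<And>i. i \<le> N \<Longrightarrow> ?a i \<in> carrier G" using cochain0_carrier[OF c] pt by blast
        show "\<And>i. i < N \<Longrightarrow> ?u' (?pc i) \<otimes> ?a (Suc i) = ?a i \<otimes> ?u (?pc i)"
        proof -
          fix i assume i: "i < N"
          have "Suc i \<le> N" "i \<le> N" using i by auto
          then have cs: "?a i \<in> carrier G" "?a (Suc i) \<in> carrier G" "?u (?pc i) \<in> carrier G"
            using cochain0_carrier[OF c pt] i cocycle_carrier[OF u(1) pcX] by blast+
          show "?u' (?pc i) \<otimes> ?a (Suc i) = ?a i \<otimes> ?u (?pc i)"
            using rel[OF i] cs by (simp add: m_assoc)
        qed
      qed
      moreover have "?u' p = gprod G (\<lambda>i. ?u' (?pc i)) N" by (rule cocycle_subdiv[OF u'(1) p n])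
      moreover have "?u p = gprod G (\<lambda>i. ?u (?pc i)) N" by (rule cocycle_subdiv[OF u(1) p n])
      moreover have "?a 0 = c (p 0)" "?a N = c (p 1)" using n by auto
      moreover have "c (p 0) \<in> carrier G" "c (p 1) \<in> carrier G" "?u p \<in> carrier G" "?u' p \<in> carrier G"
        using cochain0_carrier[OF c] path_start_in_topspace[OF p] path_finish_in_topspace[OF p]
          cocycle_carrier[OF u(1) p] cocycle_carrier[OF u'(1) p] by auto
      ultimately have "?u' p \<otimes> c (p 1) = c (p 0) \<otimes> ?u p" by simp
      then have "?u' p = c (p 0) \<otimes> ?u p \<otimes> inv (c (p 1))"
        using \<open>c (p 0) \<in> carrier G\<close> \<open>c (p 1) \<in> carrier G\<close> \<open>?u p \<in> carrier G\<close> \<open>?u' p \<in> carrier G\<close>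
        by (metis inv_solve_right m_closed)
      then show ?thesis using p by (simp add: act_apply)
    qed
  qed
  then have "?u' \<in> orbit1 X b G ?u" unfolding orbit1_def using c by blast
  then have "orbit1 X b G ?u' = orbit1 X b G ?u" by (rule orbit_eq[OF b u(1)])
  then show ?thesis using u(2) u'(2) by simp
qed


lemma existence:
  assumes compat: "\<forall>U\<in>UU. \<forall>V\<in>UU. res1 (subtopology X U) b G (U \<inter> V) (hU U) = res1 (subtopology X V) b G (U \<inter> V) (hU V)"
  shows "\<exists>h\<in>H1 X b G. \<forall>U\<in>UU. res1 X b G U h = hU U"
proof -
  define uU where "uU U = (SOME u. u \<in> hU U)" for U
  have uU: "uU U \<in> hU U \<and> uU U \<in> cocycle1 (subtopology X U) b G \<and> orbit1 (subtopology X U) b G (uU U) = hU U"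
    if U: "U \<in> UU" for U
  proof -
    have i: "uU U \<in> hU U" unfolding uU_def by (rule H1_some[OF bt[OF U] hUin[OF U]])
    show ?thesis using i H1_elem[OF bt[OF U] hUin[OF U] i] by simp
  qed
  have uUc: "uU U g \<in> carrier G" if "U \<in> UU" "pathin (subtopology X U) g" for U g
    using cocycle_carrier[OF conjunct1[OF conjunct2[OF uU[OF that(1)]]] that(2)] .
  have rel: "\<exists>c \<in> cochain0 (subtopology X (U \<inter> W)) b G. \<forall>p. pathin (subtopology X (U \<inter> W)) p \<longrightarrow>
      uU U p = c (p 0) \<otimes> uU W p \<otimes> inv (c (p 1))" if U: "U \<in> UU" and W: "W \<in> UU" for U W
  proof -
    let ?Q = "Collect (pathin (subtopology X (U \<inter> W)))"
    have bUW: "b \<in> U \<inter> W" using bU U W by blast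
    have bUW': "b \<in> topspace (subtopology X (U \<inter> W))" using bUW b by simp
    have s1: "subtopology (subtopology X U) (U \<inter> W) = subtopology X (U \<inter> W)"
      by (simp add: subtopology_subtopology Int_absorb1)
    have s2: "subtopology (subtopology X W) (U \<inter> W) = subtopology X (U \<inter> W)"
      by (simp add: subtopology_subtopology Int_absorb1 Int_commute)
    have r1: "res1 (subtopology X U) b G (U \<inter> W) (hU U) = orbit1 (subtopology X (U \<inter> W)) b G (restrict (uU U) ?Q)"
      using res1_rep[OF bt[OF U] bUW hUin[OF U] conjunct1[OF uU[OF U]]] unfolding s1 .
    have r2: "res1 (subtopology X W) b G (U \<inter> W) (hU W) = orbit1 (subtopology X (U \<inter> W)) b G (restrict (uU W) ?Q)"
      using res1_rep[OF bt[OF W] bUW hUin[OF W] conjunct1[OF uU[OF W]]] unfolding s2 .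
    have c1: "restrict (uU U) ?Q \<in> cocycle1 (subtopology X (U \<inter> W)) b G"
      using restr_cocycle[OF conjunct1[OF conjunct2[OF uU[OF U]]] bUW bt[OF U]] unfolding s1 .
    have c2: "restrict (uU W) ?Q \<in> cocycle1 (subtopology X (U \<inter> W)) b G"
      using restr_cocycle[OF conjunct1[OF conjunct2[OF uU[OF W]]] bUW bt[OF W]] unfolding s2 .
    have "orbit1 (subtopology X (U \<inter> W)) b G (restrict (uU U) ?Q) = orbit1 (subtopology X (U \<inter> W)) b G (restrict (uU W) ?Q)"
    proof -
      have "res1 (subtopology X U) b G (U \<inter> W) (hU U) = res1 (subtopology X W) b G (U \<inter> W) (hU W)"
        using compat U W by blast
      then show ?thesis unfolding r1 r2 .
    qed
    then have "restrict (uU U) ?Q \<in> orbit1 (subtopology X (U \<inter> W)) b G (restrict (uU W) ?Q)"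
      using orbit_eq_iff[OF bUW' c1 c2] by blast
    then obtain c where c: "c \<in> cochain0 (subtopology X (U \<inter> W)) b G"
      and e: "restrict (uU U) ?Q = cochain_act (subtopology X (U \<inter> W)) G c (restrict (uU W) ?Q)"
      by (auto simp: orbit1_def)
    have "uU U p = c (p 0) \<otimes> uU W p \<otimes> inv (c (p 1))" if p: "pathin (subtopology X (U \<inter> W)) p" for p
      using fun_cong[OF e, of p] p by (simp add: act_apply)
    then show ?thesis using c by blast
  qed
  have D: "inv (uU A g) \<otimes> uU B g = inv (uU A g') \<otimes> uU B g'"
    if A: "A \<in> UU" and B: "B \<in> UU" and g: "pathin (subtopology X (A \<inter> B)) g" "g 0 = b" "g 1 = x"
      and g': "pathin (subtopology X (A \<inter> B)) g'" "g' 0 = b" "g' 1 = x" for A B g g' x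
  proof -
    obtain c where c: "c \<in> cochain0 (subtopology X (A \<inter> B)) b G"
      and e: "\<And>p. pathin (subtopology X (A \<inter> B)) p \<Longrightarrow> uU A p = c (p 0) \<otimes> uU B p \<otimes> inv (c (p 1))"
      using rel[OF A B] by blast
    have x: "x \<in> topspace (subtopology X (A \<inter> B))" using path_finish_in_topspace[OF g(1)] g(3) by simp
    have cx: "c x \<in> carrier G" by (rule cochain0_carrier[OF c x])
    have val: "inv (uU A q) \<otimes> uU B q = c x" if q: "pathin (subtopology X (A \<inter> B)) q" "q 0 = b" "q 1 = x" for q
    proof -
      have qa: "uU A q \<in> carrier G" using uUc[OF A pathin_mono[OF q(1)]] by blast
      have qb: "uU B q \<in> carrier G" using uUc[OF B pathin_mono[OF q(1)]] by blast
      have "uU A q = uU B q \<otimes> inv (c x)"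
        using e[OF q(1)] q cochain0_b[OF c] qb by simp
      then show ?thesis using solve_c[OF qa qb cx] by simp
    qed
    show ?thesis using val[OF g] val[OF g'] by simp
  qed
  have E: "uU U g0 \<otimes> uU U p \<otimes> inv (uU U g1) = uU W g0 \<otimes> uU W p \<otimes> inv (uU W g1)"
    if U: "U \<in> UU" and W: "W \<in> UU" and p: "pathin (subtopology X (U \<inter> W)) p"
      and g0: "pathin (subtopology X (U \<inter> W)) g0" "g0 0 = b" "g0 1 = p 0"
      and g1: "pathin (subtopology X (U \<inter> W)) g1" "g1 0 = b" "g1 1 = p 1" for U W p g0 g1
  proof -
    obtain c where c: "c \<in> cochain0 (subtopology X (U \<inter> W)) b G"
      and e: "\<And>p. pathin (subtopology X (U \<inter> W)) p \<Longrightarrow> uU U p = c (p 0) \<otimes> uU W p \<otimes> inv (c (p 1))"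
      using rel[OF U W] by blast
    have p01: "p 0 \<in> topspace (subtopology X (U \<inter> W))" "p 1 \<in> topspace (subtopology X (U \<inter> W))"
      using path_start_in_topspace[OF p] path_finish_in_topspace[OF p] by auto
    have cs: "c (p 0) \<in> carrier G" "c (p 1) \<in> carrier G" using cochain0_carrier[OF c] p01 by auto
    have ws: "uU W g0 \<in> carrier G" "uU W p \<in> carrier G" "uU W g1 \<in> carrier G"
      using uUc[OF W] pathin_mono[OF g0(1)] pathin_mono[OF g1(1)] pathin_mono[OF p] by blast+
    have "uU U g0 = uU W g0 \<otimes> inv (c (p 0))" using e[OF g0(1)] g0 cochain0_b[OF c] ws by simp
    moreover have "uU U g1 = uU W g1 \<otimes> inv (c (p 1))" using e[OF g1(1)] g1 cochain0_b[OF c] ws by simp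
    moreover have "uU U p = c (p 0) \<otimes> uU W p \<otimes> inv (c (p 1))" by (rule e[OF p])
    ultimately show ?thesis using alg1[OF ws(1) cs(1) ws(2) cs(2) ws(3)] by simp
  qed
  define UX where "UX x = (SOME U. U \<in> UU \<and> x \<in> U)" for x
  have UX: "UX x \<in> UU \<and> x \<in> UX x" if "x \<in> topspace X" for x
    unfolding UX_def by (rule someI_ex) (use that cover in auto)
  have topX: "x \<in> topspace X" if "U \<in> UU" "x \<in> U" for U x
    using openin_subset[OF opn[OF that(1)]] that(2) by blast
  define gam where "gam U x = (SOME g. pathin (subtopology X (UX x \<inter> U)) g \<and> g 0 = b \<and> g 1 = x)" for U x
  have gam: "pathin (subtopology X (UX x \<inter> U)) (gam U x) \<and> gam U x 0 = b \<and> gam U x 1 = x"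
    if U: "U \<in> UU" and x: "x \<in> U" for U x
  proof -
    have A: "UX x \<in> UU" "x \<in> UX x" using UX[OF topX[OF U x]] by auto
    obtain g where "pathin (subtopology X (UX x \<inter> U)) g" "g 0 = b" "g 1 = x"
      using get_path[OF pc2[OF A(1) U], of b x] bU A U x by blast
    then have "\<exists>g. pathin (subtopology X (UX x \<inter> U)) g \<and> g 0 = b \<and> g 1 = x" by blast
    then show ?thesis unfolding gam_def by (rule someI_ex)
  qed
  define d where "d U = (\<lambda>x\<in>topspace (subtopology X U). inv (uU (UX x) (gam U x)) \<otimes> uU U (gam U x))" for U
  have d_val: "d U x = inv (uU (UX x) g) \<otimes> uU U g"
    if U: "U \<in> UU" and x: "x \<in> U" and g: "pathin (subtopology X (UX x \<inter> U)) g" "g 0 = b" "g 1 = x" for U x g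
  proof -
    have A: "UX x \<in> UU" using UX[OF topX[OF U x]] by auto
    have "d U x = inv (uU (UX x) (gam U x)) \<otimes> uU U (gam U x)"
      using x topU[OF U] by (simp add: d_def)
    also have "\<dots> = inv (uU (UX x) g) \<otimes> uU U g"
      by (rule D[OF A U]) (use gam[OF U x] g in auto)
    finally show ?thesis .
  qed
  have d: "d U \<in> cochain0 (subtopology X U) b G" if U: "U \<in> UU" for U
    unfolding cochain0_def
  proof (intro CollectI conjI)
    show "d U \<in> topspace (subtopology X U) \<rightarrow>\<^sub>E carrier G"
      unfolding d_def restrict_PiE_iff
    proof
      fix x assume "x \<in> topspace (subtopology X U)"
      then have x: "x \<in> U" using topU[OF U] by simp
      have A: "UX x \<in> UU" using UX[OF topX[OF U x]] by auto
      have g: "pathin (subtopology X (UX x \<inter> U)) (gam U x)" using gam[OF U x] by blast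
      show "inv (uU (UX x) (gam U x)) \<otimes> uU U (gam U x) \<in> carrier G"
        using uUc[OF A pathin_mono[OF g]] uUc[OF U pathin_mono[OF g]] by simp
    qed
    have A: "UX b \<in> UU" "b \<in> UX b" using UX[OF b] by auto
    have cb: "pathin (subtopology X (UX b \<inter> U)) (\<lambda>t. b)" using b A bU[OF U] by simp
    have "d U b = inv (uU (UX b) (\<lambda>t. b)) \<otimes> uU U (\<lambda>t. b)"
      by (rule d_val[OF U bU[OF U] cb]) simp_all
    also have "\<dots> = \<one>"
      using cocycle_const[OF conjunct1[OF conjunct2[OF uU[OF A(1)]]] bt[OF A(1)]]
        cocycle_const[OF conjunct1[OF conjunct2[OF uU[OF U]]] bt[OF U]] by simp
    finally show "d U b = \<one>" .
  qed
  define v where "v U = cochain_act (subtopology X U) G (d U) (uU U)" for U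
  have vc: "v U \<in> cocycle1 (subtopology X U) b G" if U: "U \<in> UU" for U
    unfolding v_def by (rule act_cocycle[OF conjunct1[OF conjunct2[OF uU[OF U]]] d[OF U] bt[OF U]])
  have vorb: "orbit1 (subtopology X U) b G (v U) = hU U" if U: "U \<in> UU" for U
  proof -
    have "v U \<in> orbit1 (subtopology X U) b G (uU U)" unfolding v_def orbit1_def using d[OF U] by blast
    then show ?thesis using orbit_eq[OF bt[OF U] conjunct1[OF conjunct2[OF uU[OF U]]]] uU[OF U] by simp
  qed
  have agree: "v U p = v W p" if U: "U \<in> UU" and W: "W \<in> UU"
    and pU: "pathin (subtopology X U) p" and pW: "pathin (subtopology X W) p" for U W p
  proof -
    have pUW: "pathin (subtopology X (U \<inter> W)) p" using pU pW by (auto simp: pathin_subtopology)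
    have x0: "p 0 \<in> U \<inter> W" and x1: "p 1 \<in> U \<inter> W"
      using pU pW by (auto simp: pathin_subtopology)
    have A0: "UX (p 0) \<in> UU" "p 0 \<in> UX (p 0)" using UX[OF topX[OF U]] x0 by auto
    have A1: "UX (p 1) \<in> UU" "p 1 \<in> UX (p 1)" using UX[OF topX[OF U]] x1 by auto
    obtain g0 where g0: "pathin (subtopology X (UX (p 0) \<inter> U \<inter> W)) g0" "g0 0 = b" "g0 1 = p 0"
      using get_path[OF pc3[OF A0(1) U W], of b "p 0"] bU A0 U W x0 by blast
    obtain g1 where g1: "pathin (subtopology X (UX (p 1) \<inter> U \<inter> W)) g1" "g1 0 = b" "g1 1 = p 1"
      using get_path[OF pc3[OF A1(1) U W], of b "p 1"] bU A1 U W x1 by blast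
    have g0s: "pathin (subtopology X (UX (p 0) \<inter> U)) g0" "pathin (subtopology X (UX (p 0) \<inter> W)) g0"
      "pathin (subtopology X (U \<inter> W)) g0" "pathin (subtopology X U) g0" "pathin (subtopology X W) g0"
      "pathin (subtopology X (UX (p 0))) g0"
      by (rule pathin_mono[OF g0(1)]; blast)+
    have g1s: "pathin (subtopology X (UX (p 1) \<inter> U)) g1" "pathin (subtopology X (UX (p 1) \<inter> W)) g1"
      "pathin (subtopology X (U \<inter> W)) g1" "pathin (subtopology X U) g1" "pathin (subtopology X W) g1"
      "pathin (subtopology X (UX (p 1))) g1"
      by (rule pathin_mono[OF g1(1)]; blast)+
    have cs: "uU (UX (p 0)) g0 \<in> carrier G" "uU (UX (p 1)) g1 \<in> carrier G"
      "uU U g0 \<in> carrier G" "uU U g1 \<in> carrier G" "uU U p \<in> carrier G"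
      "uU W g0 \<in> carrier G" "uU W g1 \<in> carrier G" "uU W p \<in> carrier G"
      using uUc A0 A1 U W g0s g1s pU pW by blast+
    have "v U p = d U (p 0) \<otimes> uU U p \<otimes> inv (d U (p 1))"
      unfolding v_def using pU by (simp add: act_apply)
    also have "\<dots> = (inv (uU (UX (p 0)) g0) \<otimes> uU U g0) \<otimes> uU U p \<otimes> inv (inv (uU (UX (p 1)) g1) \<otimes> uU U g1)"
      using d_val[OF U _ g0s(1) g0(2,3)] d_val[OF U _ g1s(1) g1(2,3)] x0 x1 by simp
    also have "\<dots> = inv (uU (UX (p 0)) g0) \<otimes> (uU U g0 \<otimes> uU U p \<otimes> inv (uU U g1)) \<otimes> uU (UX (p 1)) g1"
      by (rule alg2) (use cs in auto)
    also have "uU U g0 \<otimes> uU U p \<otimes> inv (uU U g1) = uU W g0 \<otimes> uU W p \<otimes> inv (uU W g1)"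
      by (rule E[OF U W pUW g0s(3) g0(2,3) g1s(3) g1(2,3)])
    also have "inv (uU (UX (p 0)) g0) \<otimes> (uU W g0 \<otimes> uU W p \<otimes> inv (uU W g1)) \<otimes> uU (UX (p 1)) g1
        = (inv (uU (UX (p 0)) g0) \<otimes> uU W g0) \<otimes> uU W p \<otimes> inv (inv (uU (UX (p 1)) g1) \<otimes> uU W g1)"
      by (rule alg2[symmetric]) (use cs in auto)
    also have "\<dots> = d W (p 0) \<otimes> uU W p \<otimes> inv (d W (p 1))"
      using d_val[OF W _ g0s(2) g0(2,3)] d_val[OF W _ g1s(2) g1(2,3)] x0 x1 by simp
    also have "\<dots> = v W p"
      unfolding v_def using pW by (simp add: act_apply)
    finally show ?thesis .
  qed
  have ES: "ext_setup G X b UU v"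
    unfolding ext_setup_def ext_setup_axioms_def
    using is_group opn cover bU ne vc agree by blast
  obtain u where u: "u \<in> cocycle1 X b G" and ur: "\<And>U. U \<in> UU \<Longrightarrow> restrict u (Collect (pathin (subtopology X U))) = v U"
    using ext_setup.ext_exists[OF ES] by blast
  have hH: "orbit1 X b G u \<in> H1 X b G" by (rule orbit_in_H1[OF u])
  have "res1 X b G U (orbit1 X b G u) = hU U" if U: "U \<in> UU" for U
    using res1_rep[OF b bU[OF U] hH orbit_self[OF b u]] ur[OF U] vorb[OF U] by simp
  then show ?thesis using hH by blast
qed


end

theorem theorem5p1:
  fixes X :: "'a topology" and b :: 'a and \<U> :: "'a set set"
    and G :: "('g, 'm) monoid_scheme" and hU :: "'a set \<Rightarrow> ((real \<Rightarrow> 'a) \<Rightarrow> 'g) set"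
  assumes "b \<in> topspace X"
    and "\<And>U. U \<in> \<U> \<Longrightarrow> openin X U"
    and "\<Union>\<U> = topspace X"
    and "\<And>U. U \<in> \<U> \<Longrightarrow> b \<in> U"
    and "\<And>U. U \<in> \<U> \<Longrightarrow> path_connectedin X U"
    and "\<And>U V. U \<in> \<U> \<Longrightarrow> V \<in> \<U> \<Longrightarrow> path_connectedin X (U \<inter> V)"
    and "\<And>U V W. U \<in> \<U> \<Longrightarrow> V \<in> \<U> \<Longrightarrow> W \<in> \<U> \<Longrightarrow> path_connectedin X (U \<inter> V \<inter> W)"
    and "group G"
    and "\<And>U. U \<in> \<U> \<Longrightarrow> hU U \<in> H1 (subtopology X U) b G"
  shows "((\<exists>h \<in> H1 X b G. \<forall>U \<in> \<U>. res1 X b G U h = hU U) \<longleftrightarrow>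
           (\<forall>U \<in> \<U>. \<forall>V \<in> \<U>. res1 (subtopology X U) b G (U \<inter> V) (hU U)
                              = res1 (subtopology X V) b G (U \<inter> V) (hU V)))
         \<and> (\<forall>h \<in> H1 X b G. \<forall>h' \<in> H1 X b G.
              (\<forall>U \<in> \<U>. res1 X b G U h = hU U) \<and> (\<forall>U \<in> \<U>. res1 X b G U h' = hU U) \<longrightarrow> h = h')"
proof -
  have TS: "thm_setup G X b \<U> hU"
    unfolding thm_setup_def thm_setup_axioms_def using assms by blast
  have A: "(\<exists>h \<in> H1 X b G. \<forall>U \<in> \<U>. res1 X b G U h = hU U) \<longleftrightarrow>
           (\<forall>U \<in> \<U>. \<forall>V \<in> \<U>. res1 (subtopology X U) b G (U \<inter> V) (hU U)
                              = res1 (subtopology X V) b G (U \<inter> V) (hU V))"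
  proof
    assume "\<exists>h \<in> H1 X b G. \<forall>U \<in> \<U>. res1 X b G U h = hU U"
    then obtain h where "h \<in> H1 X b G" "\<forall>U \<in> \<U>. res1 X b G U h = hU U" by blast
    then show "\<forall>U \<in> \<U>. \<forall>V \<in> \<U>. res1 (subtopology X U) b G (U \<inter> V) (hU U)
                              = res1 (subtopology X V) b G (U \<inter> V) (hU V)"
      by (rule thm_setup.necessity[OF TS])
  next
    assume "\<forall>U \<in> \<U>. \<forall>V \<in> \<U>. res1 (subtopology X U) b G (U \<inter> V) (hU U)
                              = res1 (subtopology X V) b G (U \<inter> V) (hU V)"
    then show "\<exists>h \<in> H1 X b G. \<forall>U \<in> \<U>. res1 X b G U h = hU U"
      by (rule thm_setup.existence[OF TS])
  qed
  have B: "\<forall>h \<in> H1 X b G. \<forall>h' \<in> H1 X b G.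
              (\<forall>U \<in> \<U>. res1 X b G U h = hU U) \<and> (\<forall>U \<in> \<U>. res1 X b G U h' = hU U) \<longrightarrow> h = h'"
    using thm_setup.uniqueness[OF TS] by blast
  show ?thesis using A B by blast
qed

end
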